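(* Let $I^h\subset\mathbb{K}[S_M^h]$ be a homogeneous ideal and let $J^h\subset\mathbb{K}[\mathbf{y}]$ be the ideal generated by $\varphi(I^h)\cup T$. If $G$ is a Gröbner basis of $J^h$ with respect to the monomial order $<_y$, then $\psi(G)$ is a sparse Gröbner basis of $I^h$ with respect to the graded sparse order $\prec_h$.
   Context: Let $\mathbb{K}$ be a field of characteristic $0$, $M\subset\mathbb{R}^n$ a polytope with $0\in M$, $S_M\subset\mathbb{Z}^n$ the affine semigroup generated by $M\cap\mathbb{Z}^n$ and $S_M^h\subset\mathbb{Z}^{n+1}$ the one generated by $\{(s,1):s\in M\cap\mathbb{Z}^n\}$, both assumed pointed. $\mathbb{K}[S]$ is the semigroup algebra with monomials $X^s$, $X^sX^t=X^{s+t}$; $\mathbb{K}[S_M^h]$ is graded by $\deg X^{(s,d)}=d$, and "homogeneous" refers to this grading. $\chi:\mathbb{K}[S_M^h]\to\mathbb{K}[S_M]$, $X^{(s,d)}\mapsto X^s$. The affine degree $\delta^A(X^s)$ is the least $d$ with $(s,d)\in S_M^h$, extended to polynomials by taking the maximum over the support; the sparse degree of $f\in\mathbb{K}[S_M^h]$ is $\delta(f)=\delta^A(\chi(f))$. Fix a monomial order $<_M$ on $\mathbb{K}[S_M]$; the sparse order: $X^s\prec X^r$ iff $\delta^A(X^s)<\delta^A(X^r)$, or equality and $X^s<_MX^r$; the graded sparse order on monomials of $\mathbb{K}[S_M^h]$: $X^{(s,d)}\prec_hX^{(r,d')}$ iff $d<d'$, or $d=d'$ and $X^s\prec X^r$.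 Divisibility: $X^{(s,d_s)}\mid_\delta X^{(r,d_r)}$ if some monomial $X^{(t,d_t)}$ satisfies $X^{(s,d_s)}X^{(t,d_t)}=X^{(r,d_r)}$ and $\delta(X^{(s,d_s)})+\delta(X^{(t,d_t)})=\delta(X^{(r,d_r)})$. A sparse Gröbner basis of an ideal $I^h\subset\mathbb{K}[S_M^h]$ w.r.t. $\prec_h$ is a subset of $I^h$ generating $I^h$ such that for every nonzero $f\in I^h$ some element $g$ of it satisfies $\mathrm{LM}_{\prec_h}(g)\mid_\delta\mathrm{LM}_{\prec_h}(f)$. Let $a_0,\dots,a_m$ be the elements of $\{(s,1):s\in M\cap\mathbb{Z}^n\}$ with $a_0=(0,1)$. Let $\mathbb{K}[\mathbf{y}]=\mathbb{K}[y_0,\dots,y_m]$ with standard grading and $\psi:\mathbb{K}[\mathbf{y}]\to\mathbb{K}[S_M^h]$ the degree-preserving $\mathbb{K}$-algebra epimorphism $y_i\mapsto X^{a_i}$; its kernel $T$ is the (homogeneous, prime) lattice ideal $\langle\mathbf{y}^u-\mathbf{y}^v:\psi(\mathbf{y}^u)=\psi(\mathbf{y}^v)\rangle$. Fix any monomial order $\tilde<$ on $\mathbb{K}[\mathbf{y}]$ and define the monomial order $<_y$: $\mathbf{y}^a<_y\mathbf{y}^b$ iff $\deg\mathbf{y}^a<\deg\mathbf{y}^b$; or the total degrees are equal and $\deg_{y_0}\mathbf{y}^a>\deg_{y_0}\mathbf{y}^b$; or both are equal and $\chi(\psi(\mathbf{y}^a))<_M\chi(\psi(\mathbf{y}^b))$;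 or all these are equal and $\mathbf{y}^a\,\tilde<\,\mathbf{y}^b$. For $g\in\mathbb{K}[\mathbf{y}]$, $\eta(g)$ is the normal form (remainder of division by a Gröbner basis) of $g$ with respect to $T$ and $<_y$. Define $\varphi:\mathbb{K}[S_M^h]\to\mathbb{K}[\mathbf{y}]$ by $\varphi(f)=\eta(g)$ for any $g$ with $\psi(g)=f$ (well defined). *)

theory Defs
  imports "HOL-Analysis.Analysis" "HOL-Library.Poly_Mapping" "HOL-Library.Product_Plus"
begin

(* Points of Z^n are int^'n; exponents of S_M^h in Z^(n+1) are pairs (s,d) :: (int^'n) \<times> int.
   Polynomial ring K[y]: variables are indexed by the lattice points of M (the variable y_0
   is the one indexed by the lattice point 0); monomials are (int^'n \<Rightarrow>\<^sub>0 nat). *)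

definition lattice_pts :: "(real^'n) set \<Rightarrow> (int^'n) set" where
  "lattice_pts M = {s. (\<chi> i. real_of_int (s$i)) \<in> M}"

inductive_set SM :: "(real^'n) set \<Rightarrow> (int^'n) set" for M where
  SM_zero: "0 \<in> SM M"
| SM_add: "s \<in> lattice_pts M \<Longrightarrow> t \<in> SM M \<Longrightarrow> s + t \<in> SM M"

inductive_set SMh :: "(real^'n) set \<Rightarrow> ((int^'n) \<times> int) set" for M where
  SMh_zero: "(0, 0) \<in> SMh M"
| SMh_add: "s \<in> lattice_pts M \<Longrightarrow> x \<in> SMh M \<Longrightarrow> (s, 1) + x \<in> SMh M"

definition pointed :: "'a::ab_group_add set \<Rightarrow> bool" where
  "pointed S \<longleftrightarrow> (\<forall>s\<in>S. - s \<in> S \<longrightarrow> s = 0)"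

definition KS :: "'a set \<Rightarrow> ('a \<Rightarrow>\<^sub>0 'k::zero) set" where
  "KS S = {f. Poly_Mapping.keys f \<subseteq> S}"

inductive_set ideal_gen :: "'a::semiring_0 set \<Rightarrow> 'a set \<Rightarrow> 'a set" for R B where
  ideal_gen_zero: "0 \<in> ideal_gen R B"
| ideal_gen_step: "r \<in> R \<Longrightarrow> b \<in> B \<Longrightarrow> x \<in> ideal_gen R B \<Longrightarrow> r * b + x \<in> ideal_gen R B"

definition homogeneous :: "(('a \<times> int) \<Rightarrow>\<^sub>0 'k::zero) \<Rightarrow> bool" where
  "homogeneous f \<longleftrightarrow> (\<exists>d. \<forall>k\<in>Poly_Mapping.keys f. snd k = d)"

definition homogeneous_ideal :: "(real^'n) set \<Rightarrow> (((int^'n) \<times> int) \<Rightarrow>\<^sub>0 'k::semiring_0) set \<Rightarrow> bool" where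
  "homogeneous_ideal M I \<longleftrightarrow>
     (\<exists>B \<subseteq> KS (SMh M). (\<forall>b\<in>B. homogeneous b) \<and> I = ideal_gen (KS (SMh M)) B)"

definition monomial_order :: "'a::comm_monoid_add set \<Rightarrow> ('a \<Rightarrow> 'a \<Rightarrow> bool) \<Rightarrow> bool" where
  "monomial_order E lt \<longleftrightarrow>
     (\<forall>a\<in>E. \<not> lt a a) \<and>
     (\<forall>a\<in>E. \<forall>b\<in>E. \<forall>c\<in>E. lt a b \<longrightarrow> lt b c \<longrightarrow> lt a c) \<and>
     (\<forall>a\<in>E. \<forall>b\<in>E. a \<noteq> b \<longrightarrow> lt a b \<or> lt b a) \<and>
     (\<forall>a\<in>E. \<forall>b\<in>E. \<forall>c\<in>E. lt a b \<longrightarrow> lt (a + c) (b + c)) \<and>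
     (\<forall>a\<in>E. \<not> lt a 0)"

definition Ey :: "(real^'n) set \<Rightarrow> (int^'n \<Rightarrow>\<^sub>0 nat) set" where
  "Ey M = {\<alpha>. Poly_Mapping.keys \<alpha> \<subseteq> lattice_pts M}"

definition Ky :: "(real^'n) set \<Rightarrow> ((int^'n \<Rightarrow>\<^sub>0 nat) \<Rightarrow>\<^sub>0 'k::zero) set" where
  "Ky M = {p. Poly_Mapping.keys p \<subseteq> Ey M}"

definition ydeg :: "(int^'n \<Rightarrow>\<^sub>0 nat) \<Rightarrow> nat" where
  "ydeg \<alpha> = (\<Sum>s\<in>Poly_Mapping.keys \<alpha>. Poly_Mapping.lookup \<alpha> s)"

(* psi(y^alpha) = X^(psiexp alpha) *)
definition psiexp :: "(int^'n \<Rightarrow>\<^sub>0 nat) \<Rightarrow> (int^'n) \<times> int" where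
  "psiexp \<alpha> = ((\<Sum>s\<in>Poly_Mapping.keys \<alpha>. of_nat (Poly_Mapping.lookup \<alpha> s) *s s), int (ydeg \<alpha>))"

definition psi :: "((int^'n \<Rightarrow>\<^sub>0 nat) \<Rightarrow>\<^sub>0 'k::comm_monoid_add) \<Rightarrow> (((int^'n) \<times> int) \<Rightarrow>\<^sub>0 'k)" where
  "psi p = (\<Sum>\<alpha>\<in>Poly_Mapping.keys p. Poly_Mapping.single (psiexp \<alpha>) (Poly_Mapping.lookup p \<alpha>))"

definition Tideal :: "(real^'n) set \<Rightarrow> ((int^'n \<Rightarrow>\<^sub>0 nat) \<Rightarrow>\<^sub>0 'k::comm_monoid_add) set" where
  "Tideal M = {p \<in> Ky M. psi p = 0}"

definition less_y :: "(int^'n \<Rightarrow> int^'n \<Rightarrow> bool) \<Rightarrow> ((int^'n \<Rightarrow>\<^sub>0 nat) \<Rightarrow> (int^'n \<Rightarrow>\<^sub>0 nat) \<Rightarrow> bool)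
    \<Rightarrow> (int^'n \<Rightarrow>\<^sub>0 nat) \<Rightarrow> (int^'n \<Rightarrow>\<^sub>0 nat) \<Rightarrow> bool" where
  "less_y lessM tilde a b \<longleftrightarrow>
     ydeg a < ydeg b \<or>
     (ydeg a = ydeg b \<and>
       (Poly_Mapping.lookup a 0 > Poly_Mapping.lookup b 0 \<or>
        (Poly_Mapping.lookup a 0 = Poly_Mapping.lookup b 0 \<and>
          (lessM (fst (psiexp a)) (fst (psiexp b)) \<or>
           (fst (psiexp a) = fst (psiexp b) \<and> tilde a b)))))"

definition lm :: "('a \<Rightarrow> 'a \<Rightarrow> bool) \<Rightarrow> ('a \<Rightarrow>\<^sub>0 'k::zero) \<Rightarrow> 'a" where
  "lm lt p = (THE \<alpha>. \<alpha> \<in> Poly_Mapping.keys p \<and> (\<forall>\<beta>\<in>Poly_Mapping.keys p. \<beta> \<noteq> \<alpha> \<longrightarrow> lt \<beta> \<alpha>))"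

(* normal form w.r.t. T and the order: the unique r with g - r in T and no monomial of r
   a leading monomial of an element of T (= remainder of division by a Groebner basis of T) *)
definition eta :: "(real^'n) set \<Rightarrow> ((int^'n \<Rightarrow>\<^sub>0 nat) \<Rightarrow> (int^'n \<Rightarrow>\<^sub>0 nat) \<Rightarrow> bool)
    \<Rightarrow> ((int^'n \<Rightarrow>\<^sub>0 nat) \<Rightarrow>\<^sub>0 'k::ab_group_add) \<Rightarrow> ((int^'n \<Rightarrow>\<^sub>0 nat) \<Rightarrow>\<^sub>0 'k)" where
  "eta M lt g = (THE r. r \<in> Ky M \<and> g - r \<in> Tideal M \<and>
      (\<forall>\<alpha>\<in>Poly_Mapping.keys r. \<not> (\<exists>q\<in>Tideal M. q \<noteq> (0 :: (int^'n \<Rightarrow>\<^sub>0 nat) \<Rightarrow>\<^sub>0 'k) \<and> lm lt q = \<alpha>)))"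

definition phi :: "(real^'n) set \<Rightarrow> ((int^'n \<Rightarrow>\<^sub>0 nat) \<Rightarrow> (int^'n \<Rightarrow>\<^sub>0 nat) \<Rightarrow> bool)
    \<Rightarrow> (((int^'n) \<times> int) \<Rightarrow>\<^sub>0 'k::ab_group_add) \<Rightarrow> ((int^'n \<Rightarrow>\<^sub>0 nat) \<Rightarrow>\<^sub>0 'k)" where
  "phi M lt f = eta M lt (SOME g. g \<in> Ky M \<and> psi g = f)"

definition ydvd :: "(int^'n \<Rightarrow>\<^sub>0 nat) \<Rightarrow> (int^'n \<Rightarrow>\<^sub>0 nat) \<Rightarrow> bool" where
  "ydvd a b \<longleftrightarrow> (\<exists>c. b = a + c)"

definition groebner_basis :: "((int^'n \<Rightarrow>\<^sub>0 nat) \<Rightarrow> (int^'n \<Rightarrow>\<^sub>0 nat) \<Rightarrow> bool)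
    \<Rightarrow> ((int^'n \<Rightarrow>\<^sub>0 nat) \<Rightarrow>\<^sub>0 'k::zero) set \<Rightarrow> ((int^'n \<Rightarrow>\<^sub>0 nat) \<Rightarrow>\<^sub>0 'k) set \<Rightarrow> bool" where
  "groebner_basis lt J G \<longleftrightarrow> finite G \<and> G \<subseteq> J \<and>
     (\<forall>f\<in>J. f \<noteq> 0 \<longrightarrow> (\<exists>g\<in>G. g \<noteq> 0 \<and> ydvd (lm lt g) (lm lt f)))"

definition deltaA :: "(real^'n) set \<Rightarrow> int^'n \<Rightarrow> nat" where
  "deltaA M s = (LEAST d::nat. (s, int d) \<in> SMh M)"

definition sparse_less :: "(real^'n) set \<Rightarrow> (int^'n \<Rightarrow> int^'n \<Rightarrow> bool) \<Rightarrow> int^'n \<Rightarrow> int^'n \<Rightarrow> bool" where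
  "sparse_less M lessM s r \<longleftrightarrow> deltaA M s < deltaA M r \<or> (deltaA M s = deltaA M r \<and> lessM s r)"

definition hless :: "(real^'n) set \<Rightarrow> (int^'n \<Rightarrow> int^'n \<Rightarrow> bool) \<Rightarrow> (int^'n) \<times> int \<Rightarrow> (int^'n) \<times> int \<Rightarrow> bool" where
  "hless M lessM a b \<longleftrightarrow> snd a < snd b \<or> (snd a = snd b \<and> sparse_less M lessM (fst a) (fst b))"

definition delta_dvd :: "(real^'n) set \<Rightarrow> (int^'n) \<times> int \<Rightarrow> (int^'n) \<times> int \<Rightarrow> bool" where
  "delta_dvd M a b \<longleftrightarrow>
     (\<exists>t\<in>SMh M. a + t = b \<and> deltaA M (fst a) + deltaA M (fst t) = deltaA M (fst b))"

definition sparse_groebner_basis :: "(real^'n) set \<Rightarrow> (int^'n \<Rightarrow> int^'n \<Rightarrow> bool)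
    \<Rightarrow> (((int^'n) \<times> int) \<Rightarrow>\<^sub>0 'k::semiring_0) set \<Rightarrow> (((int^'n) \<times> int) \<Rightarrow>\<^sub>0 'k) set \<Rightarrow> bool" where
  "sparse_groebner_basis M lessM I G \<longleftrightarrow> G \<subseteq> I \<and> ideal_gen (KS (SMh M)) G = I \<and>
     (\<forall>f\<in>I. f \<noteq> 0 \<longrightarrow>
        (\<exists>g\<in>G. g \<noteq> 0 \<and> delta_dvd M (lm (hless M lessM) g) (lm (hless M lessM) f)))"

end

theory Submission
  imports Defs
begin

lemma lattice_pts_finite:
  assumes "polytope M"
  shows "finite (lattice_pts M)"
proof -
  have "bounded M" using assms polytope_imp_compact compact_imp_bounded by blast
  then obtain B where B: "\<forall>x\<in>M. norm x \<le> B" by (auto simp: bounded_iff)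
  define C :: int where "C = ceiling B"
  have sub: "lattice_pts M \<subseteq> {s. \<forall>i. s$i \<in> {-C..C}}"
  proof
    fix s assume "s \<in> lattice_pts M"
    then have m: "(\<chi> i. real_of_int (s$i)) \<in> M" by (simp add: lattice_pts_def)
    show "s \<in> {s. \<forall>i. s$i \<in> {-C..C}}"
    proof (clarify)
      fix i
      have "\<bar>(\<chi> i. real_of_int (s$i)) $ i\<bar> \<le> B" using B m component_le_norm_cart order_trans by blast
      then have "\<bar>real_of_int (s$i)\<bar> \<le> B" by simp
      then show "s$i \<in> {-C..C}" unfolding C_def by (auto simp: abs_le_iff) linarith+
    qed
  qed
  have fin: "finite (vec_nth ` {s::int^'a. \<forall>i. s$i \<in> {-C..C}})"
  proof (rule finite_subset[OF _ finite_set_of_finite_funs[of UNIV "{-C..C}" 0]])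
    show "vec_nth ` {s::int^'a. \<forall>i. s$i \<in> {-C..C}} \<subseteq> {f. \<forall>x. (x \<in> UNIV \<longrightarrow> f x \<in> {-C..C}) \<and> (x \<notin> UNIV \<longrightarrow> f x = 0)}"
      by auto
  qed auto
  have "finite {s::int^'a. \<forall>i. s$i \<in> {-C..C}}"
    using finite_imageD[OF fin] by (simp add: inj_on_def vec_eq_iff)
  then show ?thesis using sub finite_subset by blast
qed


lemma keys_add_nat: "Poly_Mapping.keys (a + b) = Poly_Mapping.keys a \<union> Poly_Mapping.keys (b :: 'x \<Rightarrow>\<^sub>0 nat)"
  by (auto simp: in_keys_iff lookup_add)

lemma psiexp_superset:
  assumes "finite A" "Poly_Mapping.keys a \<subseteq> A"
  shows "psiexp a = ((\<Sum>s\<in>A. of_nat (Poly_Mapping.lookup a s) *s s), int (\<Sum>s\<in>A. Poly_Mapping.lookup a s))"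
proof -
  have 1: "(\<Sum>s\<in>Poly_Mapping.keys a. of_nat (Poly_Mapping.lookup a s) *s s) = (\<Sum>s\<in>A. of_nat (Poly_Mapping.lookup a s) *s s)"
    by (rule sum.mono_neutral_left) (use assms in \<open>auto simp: in_keys_iff\<close>)
  have 2: "(\<Sum>s\<in>Poly_Mapping.keys a. Poly_Mapping.lookup a s) = (\<Sum>s\<in>A. Poly_Mapping.lookup a s)"
    by (rule sum.mono_neutral_left) (use assms in \<open>auto simp: in_keys_iff\<close>)
  show ?thesis unfolding psiexp_def ydeg_def 1 2 ..
qed

lemma ydeg_superset:
  assumes "finite A" "Poly_Mapping.keys a \<subseteq> A"
  shows "ydeg a = (\<Sum>s\<in>A. Poly_Mapping.lookup a s)"
  unfolding ydeg_def
  by (rule sum.mono_neutral_left) (use assms in \<open>auto simp: in_keys_iff\<close>)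

lemma psiexp_add: "psiexp (a + b) = psiexp a + psiexp b"
proof -
  let ?A = "Poly_Mapping.keys a \<union> Poly_Mapping.keys b"
  have f: "finite ?A" by simp
  show ?thesis
    using psiexp_superset[OF f, of a] psiexp_superset[OF f, of b] psiexp_superset[OF f, of "a+b"]
    by (simp add: keys_add_nat lookup_add vector_sadd_rdistrib sum.distrib)
qed

lemma ydeg_add: "ydeg (a + b) = ydeg a + ydeg b"
proof -
  let ?A = "Poly_Mapping.keys a \<union> Poly_Mapping.keys b"
  have f: "finite ?A" by simp
  show ?thesis
    using ydeg_superset[OF f, of a] ydeg_superset[OF f, of b] ydeg_superset[OF f, of "a+b"]
    by (simp add: keys_add_nat lookup_add sum.distrib)
qed

lemma psiexp_zero[simp]: "psiexp 0 = 0" by (simp add: psiexp_def ydeg_def zero_prod_def)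
lemma ydeg_zero[simp]: "ydeg 0 = 0" by (simp add: ydeg_def)

lemma psiexp_single: "psiexp (Poly_Mapping.single s k) = (of_nat k *s s, int k)"
  by (simp add: psiexp_def ydeg_def zero_prod_def)

lemma ydeg_single[simp]: "ydeg (Poly_Mapping.single s k) = k"
  by (simp add: ydeg_def)

lemma snd_psiexp: "snd (psiexp a) = int (ydeg a)" by (simp add: psiexp_def)

lemma lookup_le_ydeg: "Poly_Mapping.lookup a s \<le> ydeg a"
proof (cases "s \<in> Poly_Mapping.keys a")
  case True then show ?thesis unfolding ydeg_def by (intro member_le_sum) auto
next
  case False then show ?thesis by (simp add: in_keys_iff)
qed

lemma sum_monomials: "(\<Sum>a\<in>Poly_Mapping.keys p. Poly_Mapping.single a (Poly_Mapping.lookup p a)) = p"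
proof (rule poly_mapping_eqI)
  fix k
  show "Poly_Mapping.lookup (\<Sum>a\<in>Poly_Mapping.keys p. Poly_Mapping.single a (Poly_Mapping.lookup p a)) k = Poly_Mapping.lookup p k"
    by (simp add: lookup_sum lookup_single when_def in_keys_iff)
qed

lemma ideal_gen_add:
  assumes "x \<in> ideal_gen R B" "y \<in> ideal_gen R B"
  shows "x + y \<in> ideal_gen R B"
  using assms(1) by induction (auto simp: add.assoc intro: ideal_gen.intros assms(2))

lemma ideal_gen_mult:
  fixes R :: "'a::comm_ring_1 set"
  assumes closed: "\<And>a b. a \<in> R \<Longrightarrow> b \<in> R \<Longrightarrow> a * b \<in> R" and r: "r \<in> R"
    and "x \<in> ideal_gen R B"
  shows "r * x \<in> ideal_gen R B"
  using assms(3)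
proof induction
  case ideal_gen_zero then show ?case by (simp add: ideal_gen.intros)
next
  case (ideal_gen_step r' b x)
  have "r * (r' * b + x) = (r * r') * b + r * x" by (simp add: algebra_simps)
  then show ?case using ideal_gen_step closed r by (auto intro: ideal_gen.intros)
qed

lemma ideal_gen_base:
  fixes R :: "'a::comm_ring_1 set"
  assumes "1 \<in> R" "b \<in> B" shows "b \<in> ideal_gen R B"
  using ideal_gen_step[OF assms ideal_gen_zero] by simp

lemma ideal_gen_least:
  assumes "0 \<in> S" "\<And>r b x. r \<in> R \<Longrightarrow> b \<in> B \<Longrightarrow> x \<in> S \<Longrightarrow> r * b + x \<in> S"
  shows "ideal_gen R B \<subseteq> S"
proof
  fix x assume "x \<in> ideal_gen R B" then show "x \<in> S"
    by induction (use assms in auto)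
qed

lemma ideal_gen_uminus:
  fixes R :: "'a::comm_ring_1 set"
  assumes "\<And>a. a \<in> R \<Longrightarrow> - a \<in> R" "x \<in> ideal_gen R B"
  shows "- x \<in> ideal_gen R B"
  using assms(2)
proof induction
  case ideal_gen_zero then show ?case by (simp add: ideal_gen.intros)
next
  case (ideal_gen_step r b x)
  have "(- r) * b + (- x) \<in> ideal_gen R B"
    by (rule ideal_gen.ideal_gen_step) (use ideal_gen_step assms(1) in auto)
  then show ?case by simp
qed

lemma ideal_gen_diff:
  fixes R :: "'a::comm_ring_1 set"
  assumes "\<And>a. a \<in> R \<Longrightarrow> - a \<in> R" "x \<in> ideal_gen R B" "y \<in> ideal_gen R B"
  shows "x - y \<in> ideal_gen R B"
  using ideal_gen_add[OF assms(2) ideal_gen_uminus[OF assms(1,3)]] by simp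

lemma finite_max_exists:
  assumes "finite S" "S \<noteq> {}"
    and trans: "\<And>a b c. a \<in> S \<Longrightarrow> b \<in> S \<Longrightarrow> c \<in> S \<Longrightarrow> r a b \<Longrightarrow> r b c \<Longrightarrow> r a c"
    and total: "\<And>a b. a \<in> S \<Longrightarrow> b \<in> S \<Longrightarrow> a \<noteq> b \<Longrightarrow> r a b \<or> r b a"
  shows "\<exists>m\<in>S. \<forall>b\<in>S. b \<noteq> m \<longrightarrow> r b m"
  using assms
proof (induction S rule: finite_ne_induct)
  case (singleton x) then show ?case by auto
next
  case (insert x F)
  then obtain m where m: "m \<in> F" "\<forall>b\<in>F. b \<noteq> m \<longrightarrow> r b m"
    by (metis insert_iff)
  show ?case
  proof (cases "r x m")
    case True then show ?thesis using m by auto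
  next
    case False
    then have "x = m \<or> r m x" using insert.prems(2) m(1) by blast
    then have rmx: "r m x" using insert.hyps m(1) by auto
    have "\<forall>b\<in>insert x F. b \<noteq> x \<longrightarrow> r b x"
    proof (intro ballI impI)
      fix b assume b: "b \<in> insert x F" "b \<noteq> x"
      then have bF: "b \<in> F" by simp
      show "r b x"
      proof (cases "b = m")
        case True then show ?thesis using rmx by simp
      next
        case False then have "r b m" using m bF by simp
        then show ?thesis using insert.prems(1)[of b m x] rmx bF m(1) by simp
      qed
    qed
    then show ?thesis by blast
  qed
qed

lemma lm_unique:
  assumes "a \<in> Poly_Mapping.keys p" "\<forall>b\<in>Poly_Mapping.keys p. b \<noteq> a \<longrightarrow> r b a"
    and "\<And>x y. x \<in> Poly_Mapping.keys p \<Longrightarrow> y \<in> Poly_Mapping.keys p \<Longrightarrow> r x y \<Longrightarrow> \<not> r y x"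
  shows "lm r p = a"
  unfolding lm_def
proof (rule the_equality)
  show "a \<in> Poly_Mapping.keys p \<and> (\<forall>b\<in>Poly_Mapping.keys p. b \<noteq> a \<longrightarrow> r b a)" using assms by simp
next
  fix c assume c: "c \<in> Poly_Mapping.keys p \<and> (\<forall>b\<in>Poly_Mapping.keys p. b \<noteq> c \<longrightarrow> r b c)"
  show "c = a"
  proof (rule ccontr)
    assume "c \<noteq> a"
    then have "r c a" "r a c" using c assms(1,2) by auto
    then show False using assms(3)[of c a] c assms(1) by simp
  qed
qed


lemma lex_trans_aux:
  fixes p1 p2 p3 q1 q2 q3 :: nat
  assumes "p1 < p2 \<or> (p1 = p2 \<and> (q2 < q1 \<or> (q1 = q2 \<and> (R s1 s2 \<or> (s1 = s2 \<and> T a b)))))"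
    and "p2 < p3 \<or> (p2 = p3 \<and> (q3 < q2 \<or> (q2 = q3 \<and> (R s2 s3 \<or> (s2 = s3 \<and> T b c)))))"
    and "R s1 s2 \<Longrightarrow> R s2 s3 \<Longrightarrow> R s1 s3" and "T a b \<Longrightarrow> T b c \<Longrightarrow> T a c"
  shows "p1 < p3 \<or> (p1 = p3 \<and> (q3 < q1 \<or> (q1 = q3 \<and> (R s1 s3 \<or> (s1 = s3 \<and> T a c)))))"
  using assms by auto

lemma lex_mono_aux:
  fixes p1 p2 q1 q2 pc qc :: nat
  assumes "p1 < p2 \<or> (p1 = p2 \<and> (q2 < q1 \<or> (q1 = q2 \<and> (R s1 s2 \<or> (s1 = s2 \<and> T a b)))))"
    and "R s1 s2 \<Longrightarrow> R s1' s2'" and "T a b \<Longrightarrow> T a' b'" and "s1 = s2 \<Longrightarrow> s1' = s2'"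
  shows "p1 + pc < p2 + pc \<or> (p1 + pc = p2 + pc \<and> (q2 + qc < q1 + qc \<or> (q1 + qc = q2 + qc \<and> (R s1' s2' \<or> (s1' = s2' \<and> T a' b')))))"
  using assms by auto

lemma lex3_trans_aux:
  fixes p1 p2 p3 :: int and q1 q2 q3 :: nat
  assumes "p1 < p2 \<or> (p1 = p2 \<and> (q1 < q2 \<or> (q1 = q2 \<and> R s1 s2)))"
    and "p2 < p3 \<or> (p2 = p3 \<and> (q2 < q3 \<or> (q2 = q3 \<and> R s2 s3)))"
    and "R s1 s2 \<Longrightarrow> R s2 s3 \<Longrightarrow> R s1 s3"
  shows "p1 < p3 \<or> (p1 = p3 \<and> (q1 < q3 \<or> (q1 = q3 \<and> R s1 s3)))"
  using assms by auto

lemma SMh_add_closed: "x \<in> SMh M \<Longrightarrow> y \<in> SMh M \<Longrightarrow> x + y \<in> SMh M"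
proof (induction x rule: SMh.induct)
  case SMh_zero then show ?case by (simp add: zero_prod_def[symmetric])
next
  case (SMh_add s x) then show ?case by (simp add: add.assoc SMh.intros)
qed

lemma SM_add_closed: "x \<in> SM M \<Longrightarrow> y \<in> SM M \<Longrightarrow> x + y \<in> SM M"
  by (induction x rule: SM.induct) (auto simp: add.assoc intro: SM.intros)

lemma SMh_fst: "x \<in> SMh M \<Longrightarrow> fst x \<in> SM M"
  by (induction x rule: SMh.induct) (auto intro: SM.intros)

lemma SMh_snd: "x \<in> SMh M \<Longrightarrow> snd x \<ge> 0"
  by (induction x rule: SMh.induct) auto

lemma SMh_rep: "s \<in> lattice_pts M \<Longrightarrow> (of_nat n *s s, int n) \<in> SMh M"
proof (induction n)
  case 0 then show ?case using SMh_zero by (simp add: vector_smult_lzero)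
next
  case (Suc n)
  have "(s, 1) + (of_nat n *s s, int n) \<in> SMh M" using Suc by (intro SMh_add)
  moreover have "(s, 1) + (of_nat n *s s, int n) = (of_nat (Suc n) *s s, int (Suc n))"
    by (simp add: vec_eq_iff algebra_simps)
  ultimately show ?case by simp
qed

lemma SMh_sum: "finite A \<Longrightarrow> A \<subseteq> lattice_pts M \<Longrightarrow> ((\<Sum>s\<in>A. of_nat (c s) *s s), int (\<Sum>s\<in>A. c s)) \<in> SMh M"
proof (induction A rule: finite_induct)
  case empty then show ?case using SMh_zero by simp
next
  case (insert x F)
  have "(of_nat (c x) *s x, int (c x)) + ((\<Sum>s\<in>F. of_nat (c s) *s s), int (\<Sum>s\<in>F. c s)) \<in> SMh M"
    using insert by (intro SMh_add_closed SMh_rep) auto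
  then show ?case using insert by simp
qed

lemma Ey_add: "a \<in> Ey M \<Longrightarrow> b \<in> Ey M \<Longrightarrow> a + b \<in> Ey M"
  by (auto simp: Ey_def keys_add_nat)

lemma Ey_summand: "a + b \<in> Ey M \<Longrightarrow> a \<in> Ey M \<and> b \<in> Ey M"
  by (auto simp: Ey_def keys_add_nat)

lemma Ey_zero: "0 \<in> Ey M" by (simp add: Ey_def)

lemma psiexp_SMh: "a \<in> Ey M \<Longrightarrow> psiexp a \<in> SMh M"
  unfolding psiexp_def ydeg_def Ey_def by (rule SMh_sum) auto

lemma psiexp_surj: "x \<in> SMh M \<Longrightarrow> \<exists>a\<in>Ey M. psiexp a = x"
proof (induction x rule: SMh.induct)
  case SMh_zero then show ?case using Ey_zero psiexp_zero by (metis zero_prod_def)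
next
  case (SMh_add s x)
  then obtain a where a: "a \<in> Ey M" "psiexp a = x" by auto
  have "Poly_Mapping.single s 1 + a \<in> Ey M" using a SMh_add by (intro Ey_add) (auto simp: Ey_def)
  moreover have "psiexp (Poly_Mapping.single s 1 + a) = (s, 1) + x"
    using a by (simp add: psiexp_add psiexp_single)
  ultimately show ?case by blast
qed

lemma finite_Ey_deg:
  assumes "finite (lattice_pts M)"
  shows "finite {a \<in> Ey M. ydeg a \<le> d}"
proof -
  let ?F = "{f. \<forall>x. (x \<in> lattice_pts M \<longrightarrow> f x \<in> {0..d}) \<and> (x \<notin> lattice_pts M \<longrightarrow> f x = 0)}"
  have "Poly_Mapping.lookup ` {a \<in> Ey M. ydeg a \<le> d} \<subseteq> ?F"
  proof
    fix f assume "f \<in> Poly_Mapping.lookup ` {a \<in> Ey M. ydeg a \<le> d}"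
    then obtain a where a: "a \<in> Ey M" "ydeg a \<le> d" "f = Poly_Mapping.lookup a" by auto
    have "\<forall>x. (x \<in> lattice_pts M \<longrightarrow> Poly_Mapping.lookup a x \<in> {0..d}) \<and> (x \<notin> lattice_pts M \<longrightarrow> Poly_Mapping.lookup a x = 0)"
    proof (intro allI conjI impI)
      fix x show "Poly_Mapping.lookup a x \<in> {0..d}" using lookup_le_ydeg[of a x] a(2) by simp
    next
      fix x assume x: "x \<notin> lattice_pts M"
      have "x \<notin> Poly_Mapping.keys a" using a(1) x by (auto simp: Ey_def)
      then show "Poly_Mapping.lookup a x = 0" by (simp add: in_keys_iff)
    qed
    then show "f \<in> ?F" using a(3) by simp
  qed
  moreover have "finite ?F" using assms by (intro finite_set_of_finite_funs) auto
  ultimately have "finite (Poly_Mapping.lookup ` {a \<in> Ey M. ydeg a \<le> d})" using finite_subset by blast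
  then show ?thesis by (rule finite_imageD) (simp add: inj_on_def poly_mapping.lookup_inject)
qed

locale sset =
  fixes M :: "(real^'n) set" and lessM :: "int^'n \<Rightarrow> int^'n \<Rightarrow> bool"
    and tilde :: "(int^'n \<Rightarrow>\<^sub>0 nat) \<Rightarrow> (int^'n \<Rightarrow>\<^sub>0 nat) \<Rightarrow> bool"
  assumes finL: "finite (lattice_pts M)" and zeroL: "0 \<in> lattice_pts M"
    and moM: "monomial_order (SM M) lessM" and moT: "monomial_order (Ey M) tilde"
begin

abbreviation "lt \<equiv> less_y lessM tilde"
abbreviation "hl \<equiv> hless M lessM"

lemma moM_parts1: "\<forall>a\<in>SM M. \<not> lessM a a"
  using moM unfolding monomial_order_def by (elim conjE) assumption

lemma moM_parts2: "\<forall>a\<in>SM M. \<forall>b\<in>SM M. \<forall>c\<in>SM M. lessM a b \<longrightarrow> lessM b c \<longrightarrow> lessM a c"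
  using moM unfolding monomial_order_def by (elim conjE) assumption

lemma moM_parts3: "\<forall>a\<in>SM M. \<forall>b\<in>SM M. a \<noteq> b \<longrightarrow> lessM a b \<or> lessM b a"
  using moM unfolding monomial_order_def by (elim conjE) assumption

lemma moM_parts4: "\<forall>a\<in>SM M. \<forall>b\<in>SM M. \<forall>c\<in>SM M. lessM a b \<longrightarrow> lessM (a + c) (b + c)"
  using moM unfolding monomial_order_def by (elim conjE) assumption

lemma moT_parts1: "\<forall>a\<in>Ey M. \<not> tilde a a"
  using moT unfolding monomial_order_def by (elim conjE) assumption

lemma moT_parts2: "\<forall>a\<in>Ey M. \<forall>b\<in>Ey M. \<forall>c\<in>Ey M. tilde a b \<longrightarrow> tilde b c \<longrightarrow> tilde a c"
  using moT unfolding monomial_order_def by (elim conjE) assumption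

lemma moT_parts3: "\<forall>a\<in>Ey M. \<forall>b\<in>Ey M. a \<noteq> b \<longrightarrow> tilde a b \<or> tilde b a"
  using moT unfolding monomial_order_def by (elim conjE) assumption

lemma moT_parts4: "\<forall>a\<in>Ey M. \<forall>b\<in>Ey M. \<forall>c\<in>Ey M. tilde a b \<longrightarrow> tilde (a + c) (b + c)"
  using moT unfolding monomial_order_def by (elim conjE) assumption

lemma lM_irrefl: "a \<in> SM M \<Longrightarrow> \<not> lessM a a" using moM_parts1 by blast
lemma lM_trans: "a \<in> SM M \<Longrightarrow> b \<in> SM M \<Longrightarrow> c \<in> SM M \<Longrightarrow> lessM a b \<Longrightarrow> lessM b c \<Longrightarrow> lessM a c"
  using moM_parts2 by blast
lemma lM_total: "a \<in> SM M \<Longrightarrow> b \<in> SM M \<Longrightarrow> a \<noteq> b \<Longrightarrow> lessM a b \<or> lessM b a"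
  using moM_parts3 by blast
lemma lM_mono: "a \<in> SM M \<Longrightarrow> b \<in> SM M \<Longrightarrow> c \<in> SM M \<Longrightarrow> lessM a b \<Longrightarrow> lessM (a + c) (b + c)"
  using moM_parts4 by blast
lemma tl_irrefl: "a \<in> Ey M \<Longrightarrow> \<not> tilde a a" using moT_parts1 by blast
lemma tl_trans: "a \<in> Ey M \<Longrightarrow> b \<in> Ey M \<Longrightarrow> c \<in> Ey M \<Longrightarrow> tilde a b \<Longrightarrow> tilde b c \<Longrightarrow> tilde a c"
  using moT_parts2 by blast
lemma tl_total: "a \<in> Ey M \<Longrightarrow> b \<in> Ey M \<Longrightarrow> a \<noteq> b \<Longrightarrow> tilde a b \<or> tilde b a"
  using moT_parts3 by blast
lemma tl_mono: "a \<in> Ey M \<Longrightarrow> b \<in> Ey M \<Longrightarrow> c \<in> Ey M \<Longrightarrow> tilde a b \<Longrightarrow> tilde (a + c) (b + c)"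
  using moT_parts4 by blast

lemma fst_psiexp_SM: "a \<in> Ey M \<Longrightarrow> fst (psiexp a) \<in> SM M"
  using SMh_fst psiexp_SMh by blast

lemma lt_irrefl: "a \<in> Ey M \<Longrightarrow> \<not> lt a a"
  using lM_irrefl[OF fst_psiexp_SM] tl_irrefl by (simp add: less_y_def)

lemma lt_trans:
  assumes "a \<in> Ey M" "b \<in> Ey M" "c \<in> Ey M" "lt a b" "lt b c" shows "lt a c"
proof -
  have t1: "lessM (fst (psiexp a)) (fst (psiexp b)) \<Longrightarrow> lessM (fst (psiexp b)) (fst (psiexp c)) \<Longrightarrow> lessM (fst (psiexp a)) (fst (psiexp c))"
    using lM_trans fst_psiexp_SM assms(1-3) by blast
  have t2: "tilde a b \<Longrightarrow> tilde b c \<Longrightarrow> tilde a c" using tl_trans assms(1-3) by blast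
  show ?thesis unfolding less_y_def by (rule lex_trans_aux[where R=lessM and T=tilde, OF assms(4,5)[unfolded less_y_def] t1 t2])
qed

lemma lt_asym: "a \<in> Ey M \<Longrightarrow> b \<in> Ey M \<Longrightarrow> lt a b \<Longrightarrow> \<not> lt b a"
  using lt_trans[of a b a] lt_irrefl[of a] by blast

lemma lt_total:
  assumes "a \<in> Ey M" "b \<in> Ey M" "a \<noteq> b" shows "lt a b \<or> lt b a"
proof -
  have t1: "fst (psiexp a) = fst (psiexp b) \<or> lessM (fst (psiexp a)) (fst (psiexp b)) \<or> lessM (fst (psiexp b)) (fst (psiexp a))"
    using lM_total fst_psiexp_SM assms(1,2) by blast
  have t2: "tilde a b \<or> tilde b a" using tl_total assms by blast
  show ?thesis using t1 t2 unfolding less_y_def by auto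
qed

lemma lt_mono:
  assumes "a \<in> Ey M" "b \<in> Ey M" "c \<in> Ey M" "lt a b" shows "lt (a + c) (b + c)"
proof -
  have t1: "lessM (fst (psiexp a)) (fst (psiexp b)) \<Longrightarrow> lessM (fst (psiexp (a + c))) (fst (psiexp (b + c)))"
    using lM_mono fst_psiexp_SM assms(1-3) by (simp add: psiexp_add)
  have t2: "tilde a b \<Longrightarrow> tilde (a + c) (b + c)" using tl_mono assms(1-3) by blast
  have t3: "fst (psiexp a) = fst (psiexp b) \<Longrightarrow> fst (psiexp (a + c)) = fst (psiexp (b + c))"
    by (simp add: psiexp_add)
  show ?thesis unfolding less_y_def ydeg_add lookup_add
    by (rule lex_mono_aux[where R=lessM and T=tilde, OF assms(4)[unfolded less_y_def] t1 t2 t3])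
qed

lemma lt_ydeg: "lt a b \<Longrightarrow> ydeg a \<le> ydeg b" by (auto simp: less_y_def)

definition Lset where "Lset a = {b \<in> Ey M. lt b a}"

lemma Lset_finite: "finite (Lset a)"
proof -
  have "Lset a \<subseteq> {b \<in> Ey M. ydeg b \<le> ydeg a}" using lt_ydeg by (auto simp: Lset_def)
  then show ?thesis using finite_Ey_deg[OF finL, of "ydeg a"] by (rule finite_subset)
qed

lemma lt_induct:
  assumes step: "\<And>a. a \<in> Ey M \<Longrightarrow> (\<And>b. b \<in> Ey M \<Longrightarrow> lt b a \<Longrightarrow> P b) \<Longrightarrow> P a"
  shows "a \<in> Ey M \<Longrightarrow> P a"
proof (induction "card (Lset a)" arbitrary: a rule: less_induct)
  case less
  show ?case
  proof (rule step[OF less.prems])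
    fix b assume b: "b \<in> Ey M" "lt b a"
    have "Lset b \<subset> Lset a"
    proof
      show "Lset b \<subseteq> Lset a"
      proof
        fix c assume "c \<in> Lset b"
        then have "c \<in> Ey M" "lt c b" by (auto simp: Lset_def)
        then show "c \<in> Lset a" using lt_trans[of c b a] b less.prems by (simp add: Lset_def)
      qed
      have "b \<in> Lset a" "b \<notin> Lset b" using b lt_irrefl[of b] by (auto simp: Lset_def)
      then show "Lset b \<noteq> Lset a" by blast
    qed
    then have "card (Lset b) < card (Lset a)" using Lset_finite[of a] by (rule psubset_card_mono[rotated])
    then show "P b" using less.hyps[of b] b by blast
  qed
qed

lemma hl_irrefl: "x \<in> SMh M \<Longrightarrow> \<not> hl x x"
  using lM_irrefl[OF SMh_fst] by (simp add: hless_def sparse_less_def)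

lemma hl_trans:
  assumes "x \<in> SMh M" "y \<in> SMh M" "z \<in> SMh M" "hl x y" "hl y z" shows "hl x z"
proof -
  have t: "lessM (fst x) (fst y) \<Longrightarrow> lessM (fst y) (fst z) \<Longrightarrow> lessM (fst x) (fst z)"
    using lM_trans SMh_fst assms(1-3) by blast
  show ?thesis unfolding hless_def sparse_less_def
    by (rule lex3_trans_aux[where R=lessM, OF assms(4,5)[unfolded hless_def sparse_less_def] t])
qed

lemma hl_asym: "x \<in> SMh M \<Longrightarrow> y \<in> SMh M \<Longrightarrow> hl x y \<Longrightarrow> \<not> hl y x"
  using hl_trans[of x y x] hl_irrefl[of x] by blast

lemma hl_total:
  assumes "x \<in> SMh M" "y \<in> SMh M" "x \<noteq> y" shows "hl x y \<or> hl y x"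
proof (cases "snd x = snd y")
  case False then show ?thesis by (auto simp: hless_def)
next
  case True
  then have ne: "fst x \<noteq> fst y" using assms(3) prod_eq_iff by blast
  show ?thesis
  proof (cases "deltaA M (fst x) = deltaA M (fst y)")
    case False then show ?thesis using True by (auto simp: hless_def sparse_less_def)
  next
    case True2: True
    have "lessM (fst x) (fst y) \<or> lessM (fst y) (fst x)"
      using lM_total SMh_fst assms(1,2) ne by blast
    then show ?thesis using True True2 by (auto simp: hless_def sparse_less_def)
  qed
qed

end

lemma lookup_psi:
  "Poly_Mapping.lookup (psi p) x = (\<Sum>a\<in>Poly_Mapping.keys p. if psiexp a = x then Poly_Mapping.lookup p a else 0)"
  unfolding psi_def by (simp add: lookup_sum lookup_single when_def)

lemma lookup_psi_superset:
  assumes "finite A" "Poly_Mapping.keys p \<subseteq> A"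
  shows "Poly_Mapping.lookup (psi p) x = (\<Sum>a\<in>A. if psiexp a = x then Poly_Mapping.lookup p a else 0)"
  unfolding lookup_psi
  by (rule sum.mono_neutral_left) (use assms in \<open>auto simp: in_keys_iff\<close>)

lemma psi_add: "psi (p + q) = psi p + psi q"
proof (rule poly_mapping_eqI)
  fix x
  let ?A = "Poly_Mapping.keys p \<union> Poly_Mapping.keys q"
  have f: "finite ?A" by simp
  have "Poly_Mapping.lookup (psi (p + q)) x = (\<Sum>a\<in>?A. if psiexp a = x then Poly_Mapping.lookup (p + q) a else 0)"
    by (rule lookup_psi_superset[OF f]) (rule keys_add)
  also have "\<dots> = (\<Sum>a\<in>?A. (if psiexp a = x then Poly_Mapping.lookup p a else 0) + (if psiexp a = x then Poly_Mapping.lookup q a else 0))"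
    by (rule sum.cong) (auto simp: lookup_add)
  also have "\<dots> = Poly_Mapping.lookup (psi p) x + Poly_Mapping.lookup (psi q) x"
    by (simp add: sum.distrib lookup_psi_superset[OF f])
  finally show "Poly_Mapping.lookup (psi (p + q)) x = Poly_Mapping.lookup (psi p + psi q) x"
    by (simp add: lookup_add)
qed

lemma psi_uminus: "psi (- p) = - psi (p :: _ \<Rightarrow>\<^sub>0 'k::ab_group_add)"
proof (rule poly_mapping_eqI)
  fix x
  show "Poly_Mapping.lookup (psi (- p)) x = Poly_Mapping.lookup (- psi p) x"
    by (simp add: lookup_psi keys_minus sum_negf[symmetric] if_distrib cong: if_cong)
qed

lemma psi_diff: "psi (p - q) = psi p - psi (q :: _ \<Rightarrow>\<^sub>0 'k::ab_group_add)"
  using psi_add[of p "- q"] psi_uminus[of q] by simp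

lemma psi_zero[simp]: "psi 0 = 0" by (simp add: psi_def)

lemma psi_single: "psi (Poly_Mapping.single a c) = Poly_Mapping.single (psiexp a) c"
  by (cases "c = 0") (simp_all add: psi_def)

lemma psi_sum: "psi (sum f A) = (\<Sum>i\<in>A. psi (f i))"
proof (induction A rule: infinite_finite_induct)
  case (insert x F) then show ?case by (simp add: psi_add)
qed simp_all

lemma psi_mult: "psi (p * q) = psi p * psi (q :: _ \<Rightarrow>\<^sub>0 'k::comm_semiring_1)"
proof -
  have "p * q = (\<Sum>a\<in>Poly_Mapping.keys p. Poly_Mapping.single a (Poly_Mapping.lookup p a)) * (\<Sum>b\<in>Poly_Mapping.keys q. Poly_Mapping.single b (Poly_Mapping.lookup q b))"
    by (simp only: sum_monomials)
  also have "\<dots> = (\<Sum>a\<in>Poly_Mapping.keys p. \<Sum>b\<in>Poly_Mapping.keys q. Poly_Mapping.single a (Poly_Mapping.lookup p a) * Poly_Mapping.single b (Poly_Mapping.lookup q b))"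
    by (rule sum_product)
  finally have pq: "p * q = \<dots>" .
  have "psi (p * q) = (\<Sum>a\<in>Poly_Mapping.keys p. \<Sum>b\<in>Poly_Mapping.keys q. Poly_Mapping.single (psiexp a) (Poly_Mapping.lookup p a) * Poly_Mapping.single (psiexp b) (Poly_Mapping.lookup q b))"
    unfolding pq by (simp add: psi_sum mult_single psi_single psiexp_add)
  also have "\<dots> = psi p * psi q"
    unfolding psi_def by (rule sum_product[symmetric])
  finally show ?thesis .
qed

lemma keys_psi: "Poly_Mapping.keys (psi p) \<subseteq> psiexp ` Poly_Mapping.keys p"
proof
  fix x assume "x \<in> Poly_Mapping.keys (psi p)"
  then have "(\<Sum>a\<in>Poly_Mapping.keys p. if psiexp a = x then Poly_Mapping.lookup p a else 0) \<noteq> 0"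
    by (simp add: in_keys_iff lookup_psi)
  then obtain a where "a \<in> Poly_Mapping.keys p" "(if psiexp a = x then Poly_Mapping.lookup p a else 0) \<noteq> 0"
    by (rule sum.not_neutral_contains_not_neutral)
  then show "x \<in> psiexp ` Poly_Mapping.keys p" by (auto split: if_splits)
qed

lemma KS_add: "p \<in> KS S \<Longrightarrow> q \<in> KS S \<Longrightarrow> p + q \<in> KS S"
  using keys_add by (fastforce simp: KS_def)
lemma KS_uminus: "p \<in> KS S \<Longrightarrow> - (p :: _ \<Rightarrow>\<^sub>0 'k::ab_group_add) \<in> KS S"
  by (simp add: KS_def keys_minus)
lemma KS_SMh_mult: "p \<in> KS (SMh M) \<Longrightarrow> q \<in> KS (SMh M) \<Longrightarrow> p * q \<in> KS (SMh M)"
  unfolding KS_def using keys_mult[of p q] SMh_add_closed by fastforce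
lemma KS_SMh_one: "1 \<in> KS (SMh M)"
  by (simp add: KS_def zero_prod_def SMh_zero)

lemma Ky_add: "p \<in> Ky M \<Longrightarrow> q \<in> Ky M \<Longrightarrow> p + q \<in> Ky M"
  using keys_add by (fastforce simp: Ky_def)
lemma Ky_uminus: "p \<in> Ky M \<Longrightarrow> - (p :: _ \<Rightarrow>\<^sub>0 'k::ab_group_add) \<in> Ky M"
  by (simp add: Ky_def keys_minus)
lemma Ky_diff: "p \<in> Ky M \<Longrightarrow> q \<in> Ky M \<Longrightarrow> p - (q :: _ \<Rightarrow>\<^sub>0 'k::ab_group_add) \<in> Ky M"
  using Ky_add[of p M "- q"] Ky_uminus[of q M] by simp
lemma Ky_mult: "p \<in> Ky M \<Longrightarrow> q \<in> Ky M \<Longrightarrow> p * q \<in> Ky M"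
  unfolding Ky_def using keys_mult[of p q] Ey_add by fastforce
lemma Ky_one: "1 \<in> Ky M"
  by (simp add: Ky_def Ey_zero)
lemma Ky_single: "a \<in> Ey M \<Longrightarrow> Poly_Mapping.single a c \<in> Ky M"
  by (simp add: Ky_def)
lemma Ky_zero: "0 \<in> Ky M" by (simp add: Ky_def)

lemma psi_KS: "p \<in> Ky M \<Longrightarrow> psi p \<in> KS (SMh M)"
  unfolding KS_def Ky_def using keys_psi[of p] psiexp_SMh by fastforce


context sset begin

lemma lm_props:
  assumes "p \<in> Ky M" "p \<noteq> 0"
  shows "lm lt p \<in> Poly_Mapping.keys p \<and> (\<forall>b\<in>Poly_Mapping.keys p. b \<noteq> lm lt p \<longrightarrow> lt b (lm lt p))"
proof -
  have K: "Poly_Mapping.keys p \<subseteq> Ey M" using assms(1) by (simp add: Ky_def)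
  obtain m where m: "m \<in> Poly_Mapping.keys p" "\<forall>b\<in>Poly_Mapping.keys p. b \<noteq> m \<longrightarrow> lt b m"
  proof -
    have "\<exists>m\<in>Poly_Mapping.keys p. \<forall>b\<in>Poly_Mapping.keys p. b \<noteq> m \<longrightarrow> lt b m"
    proof (rule finite_max_exists)
      show "Poly_Mapping.keys p \<noteq> {}" using assms(2) by simp
      fix a b c assume "a \<in> Poly_Mapping.keys p" "b \<in> Poly_Mapping.keys p" "c \<in> Poly_Mapping.keys p" "lt a b" "lt b c"
      then show "lt a c" using lt_trans[of a b c] K by blast
    next
      fix a b assume "a \<in> Poly_Mapping.keys p" "b \<in> Poly_Mapping.keys p" "a \<noteq> b"
      then show "lt a b \<or> lt b a" using lt_total[of a b] K by blast
    qed simp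
    then show ?thesis using that by blast
  qed
  have "lm lt p = m"
  proof (rule lm_unique[where r="lt", OF m])
    fix x y assume "x \<in> Poly_Mapping.keys p" "y \<in> Poly_Mapping.keys p" "lt x y"
    then show "\<not> lt y x" using lt_asym[of x y] K by blast
  qed
  then show ?thesis using m by simp
qed

lemma lm_hl_props:
  assumes "Poly_Mapping.keys f \<subseteq> SMh M" "f \<noteq> 0"
  shows "lm hl f \<in> Poly_Mapping.keys f \<and> (\<forall>b\<in>Poly_Mapping.keys f. b \<noteq> lm hl f \<longrightarrow> hl b (lm hl f))"
proof -
  note K = assms(1)
  obtain m where m: "m \<in> Poly_Mapping.keys f" "\<forall>b\<in>Poly_Mapping.keys f. b \<noteq> m \<longrightarrow> hl b m"
  proof -
    have "\<exists>m\<in>Poly_Mapping.keys f. \<forall>b\<in>Poly_Mapping.keys f. b \<noteq> m \<longrightarrow> hl b m"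
    proof (rule finite_max_exists)
      show "Poly_Mapping.keys f \<noteq> {}" using assms(2) by simp
      fix a b c assume "a \<in> Poly_Mapping.keys f" "b \<in> Poly_Mapping.keys f" "c \<in> Poly_Mapping.keys f" "hl a b" "hl b c"
      then show "hl a c" using hl_trans[of a b c] K by blast
    next
      fix a b assume "a \<in> Poly_Mapping.keys f" "b \<in> Poly_Mapping.keys f" "a \<noteq> b"
      then show "hl a b \<or> hl b a" using hl_total[of a b] K by blast
    qed simp
    then show ?thesis using that by blast
  qed
  have "lm hl f = m"
  proof (rule lm_unique[where r="hl", OF m])
    fix x y assume "x \<in> Poly_Mapping.keys f" "y \<in> Poly_Mapping.keys f" "hl x y"
    then show "\<not> hl y x" using hl_asym[of x y] K by blast
  qed
  then show ?thesis using m by simp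
qed

definition std :: "(int^'n) \<times> int \<Rightarrow> (int^'n \<Rightarrow>\<^sub>0 nat)" where
  "std x = (SOME m. m \<in> Ey M \<and> psiexp m = x \<and> (\<forall>b\<in>Ey M. psiexp b = x \<longrightarrow> b \<noteq> m \<longrightarrow> lt m b))"

lemma std_ex:
  assumes "x \<in> SMh M"
  shows "\<exists>m. m \<in> Ey M \<and> psiexp m = x \<and> (\<forall>b\<in>Ey M. psiexp b = x \<longrightarrow> b \<noteq> m \<longrightarrow> lt m b)"
proof -
  let ?S = "{a \<in> Ey M. psiexp a = x}"
  have "?S \<subseteq> {a \<in> Ey M. ydeg a \<le> nat (snd x)}"
  proof
    fix a assume "a \<in> ?S"
    then have "a \<in> Ey M" "snd (psiexp a) = snd x" by auto
    then show "a \<in> {a \<in> Ey M. ydeg a \<le> nat (snd x)}" by (simp add: snd_psiexp)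
  qed
  then have fin: "finite ?S" using finite_Ey_deg[OF finL, of "nat (snd x)"] by (rule finite_subset)
  have ne: "?S \<noteq> {}" using psiexp_surj[OF assms] by blast
  have "\<exists>m\<in>?S. \<forall>b\<in>?S. b \<noteq> m \<longrightarrow> (\<lambda>u v. lt v u) b m"
  proof (rule finite_max_exists[OF fin ne])
    fix a b c assume "a \<in> ?S" "b \<in> ?S" "c \<in> ?S" "lt b a" "lt c b"
    then show "lt c a" using lt_trans[of c b a] by blast
  next
    fix a b assume "a \<in> ?S" "b \<in> ?S" "a \<noteq> b"
    then show "lt b a \<or> lt a b" using lt_total[of a b] by blast
  qed
  then show ?thesis by auto
qed

lemma std:
  assumes "x \<in> SMh M"
  shows "std x \<in> Ey M" "psiexp (std x) = x" "\<And>b. b \<in> Ey M \<Longrightarrow> psiexp b = x \<Longrightarrow> b \<noteq> std x \<Longrightarrow> lt (std x) b"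
proof -
  have "std x \<in> Ey M \<and> psiexp (std x) = x \<and> (\<forall>b\<in>Ey M. psiexp b = x \<longrightarrow> b \<noteq> std x \<longrightarrow> lt (std x) b)"
    unfolding std_def by (rule someI_ex[OF std_ex[OF assms]])
  then show "std x \<in> Ey M" "psiexp (std x) = x" "\<And>b. b \<in> Ey M \<Longrightarrow> psiexp b = x \<Longrightarrow> b \<noteq> std x \<Longrightarrow> lt (std x) b"
    by auto
qed

lemma std_unique:
  assumes "a \<in> Ey M" "\<And>b. b \<in> Ey M \<Longrightarrow> psiexp b = psiexp a \<Longrightarrow> b \<noteq> a \<Longrightarrow> lt a b"
  shows "std (psiexp a) = a"
proof (rule ccontr)
  assume ne: "std (psiexp a) \<noteq> a"
  have x: "psiexp a \<in> SMh M" using psiexp_SMh[OF assms(1)] .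
  have "lt (std (psiexp a)) a" using std(3)[OF x assms(1) refl] ne by simp
  moreover have "lt a (std (psiexp a))" using assms(2)[OF std(1,2)[OF x]] ne by simp
  ultimately show False using lt_asym[OF std(1)[OF x] assms(1)] by blast
qed

lemma std_inj: "x \<in> SMh M \<Longrightarrow> y \<in> SMh M \<Longrightarrow> std x = std y \<Longrightarrow> x = y"
  using std(2) by metis

lemma std_std: "x \<in> SMh M \<Longrightarrow> std (psiexp (std x)) = std x"
  using std(2) by simp

lemma deltaA_le: "(s, int k) \<in> SMh M \<Longrightarrow> deltaA M s \<le> k"
  unfolding deltaA_def by (rule Least_le)

lemma deltaA_in:
  assumes "(s, d) \<in> SMh M" shows "(s, int (deltaA M s)) \<in> SMh M"
proof -
  have "d \<ge> 0" using SMh_snd[OF assms] by simp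
  then have "(s, int (nat d)) \<in> SMh M" using assms by simp
  then show ?thesis unfolding deltaA_def by (rule LeastI)
qed

lemma split0:
  "a = Poly_Mapping.update 0 0 a + Poly_Mapping.single 0 (Poly_Mapping.lookup a 0)"
  by (rule poly_mapping_eqI) (simp add: lookup_add lookup_update lookup_single when_def)

lemma y0_bound:
  assumes "a \<in> Ey M"
  shows "Poly_Mapping.lookup a 0 + deltaA M (fst (psiexp a)) \<le> ydeg a"
proof -
  let ?a' = "Poly_Mapping.update 0 0 a"
  let ?k = "Poly_Mapping.lookup a 0"
  have sp: "a = ?a' + Poly_Mapping.single 0 ?k" by (rule split0)
  have a': "?a' \<in> Ey M" using Ey_summand[of ?a' _ M] assms sp by metis
  have pe: "psiexp a = psiexp ?a' + (0, int ?k)"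
    by (subst sp) (simp add: psiexp_add psiexp_single)
  have yd: "ydeg a = ydeg ?a' + ?k"
    by (subst sp) (simp add: ydeg_add)
  have "psiexp ?a' = (fst (psiexp a), int (ydeg ?a'))"
    using pe by (simp add: prod_eq_iff snd_psiexp)
  then have "(fst (psiexp a), int (ydeg ?a')) \<in> SMh M" using psiexp_SMh[OF a'] by simp
  then have "deltaA M (fst (psiexp a)) \<le> ydeg ?a'" by (rule deltaA_le)
  then show ?thesis using yd by simp
qed

lemma std_y0:
  assumes x: "x \<in> SMh M"
  shows "Poly_Mapping.lookup (std x) 0 + deltaA M (fst x) = nat (snd x)"
proof -
  define d where "d = nat (snd x)"
  define s where "s = fst x"
  have xd: "x = (s, int d)" using SMh_snd[OF x] by (simp add: d_def s_def)
  have ydstd: "ydeg (std x) = d" using std(2)[OF x] snd_psiexp[of "std x"] xd by simp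
  have le1: "Poly_Mapping.lookup (std x) 0 + deltaA M s \<le> d"
    using y0_bound[OF std(1)[OF x]] std(2)[OF x] ydstd xd by simp
  define \<delta> where "\<delta> = deltaA M s"
  have dle: "\<delta> \<le> d" using deltaA_le[of s d] x xd by (simp add: \<delta>_def)
  have "(s, int \<delta>) \<in> SMh M" using deltaA_in[of s "int d"] x xd by (simp add: \<delta>_def)
  then obtain b where b: "b \<in> Ey M" "psiexp b = (s, int \<delta>)" using psiexp_surj by blast
  define a where "a = b + Poly_Mapping.single 0 (d - \<delta>)"
  have aE: "a \<in> Ey M" unfolding a_def using b(1) zeroL by (intro Ey_add) (auto simp: Ey_def)
  have pa: "psiexp a = x" unfolding a_def using b(2) dle xd by (simp add: psiexp_add psiexp_single)
  have ya: "ydeg a = d" using pa snd_psiexp[of a] xd by simp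
  have la: "Poly_Mapping.lookup a 0 \<ge> d - \<delta>" unfolding a_def by (simp add: lookup_add)
  have "Poly_Mapping.lookup (std x) 0 \<ge> Poly_Mapping.lookup a 0"
  proof (cases "a = std x")
    case True then show ?thesis by simp
  next
    case False
    then have "lt (std x) a" using std(3)[OF x aE pa] by simp
    then show ?thesis using ya ydstd by (auto simp: less_y_def)
  qed
  then show ?thesis using le1 la dle by (simp add: d_def s_def \<delta>_def)
qed

lemma std_delta:
  assumes "a \<in> Ey M" "std (psiexp a) = a"
  shows "Poly_Mapping.lookup a 0 + deltaA M (fst (psiexp a)) = ydeg a"
  using std_y0[OF psiexp_SMh[OF assms(1)]] assms(2) by (simp add: snd_psiexp)

lemma std_mono:
  assumes x: "x \<in> SMh M" and y: "y \<in> SMh M" and h: "hl x y"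
  shows "lt (std x) (std y)"
proof -
  have ex: "Poly_Mapping.lookup (std x) 0 + deltaA M (fst x) = nat (snd x)" using std_y0[OF x] .
  have ey: "Poly_Mapping.lookup (std y) 0 + deltaA M (fst y) = nat (snd y)" using std_y0[OF y] .
  have dx: "int (ydeg (std x)) = snd x" using std(2)[OF x] snd_psiexp[of "std x"] by simp
  have dy: "int (ydeg (std y)) = snd y" using std(2)[OF y] snd_psiexp[of "std y"] by simp
  have fx: "fst (psiexp (std x)) = fst x" using std(2)[OF x] by simp
  have fy: "fst (psiexp (std y)) = fst y" using std(2)[OF y] by simp
  show ?thesis
    using h ex ey dx dy unfolding hless_def sparse_less_def less_y_def fx fy
    by auto
qed

lemma lt_to_hl:
  assumes a: "a \<in> Ey M" and b: "b \<in> Ey M" and sb: "std (psiexp b) = b"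
    and l: "lt a b" and ne: "psiexp a \<noteq> psiexp b"
  shows "hl (psiexp a) (psiexp b)"
proof -
  have ba: "Poly_Mapping.lookup a 0 + deltaA M (fst (psiexp a)) \<le> ydeg a" using y0_bound[OF a] .
  have eb: "Poly_Mapping.lookup b 0 + deltaA M (fst (psiexp b)) = ydeg b" using std_delta[OF b sb] .
  have "ydeg a \<noteq> ydeg b \<or> fst (psiexp a) \<noteq> fst (psiexp b)"
    using ne by (auto simp: prod_eq_iff snd_psiexp)
  then show ?thesis
    using l ba eb unfolding hless_def sparse_less_def less_y_def snd_psiexp
    by auto
qed

end

context sset begin

definition Phi :: "((int^'n) \<times> int \<Rightarrow>\<^sub>0 'k::comm_monoid_add) \<Rightarrow> ((int^'n \<Rightarrow>\<^sub>0 nat) \<Rightarrow>\<^sub>0 'k)" where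
  "Phi f = (\<Sum>x\<in>Poly_Mapping.keys f. Poly_Mapping.single (std x) (Poly_Mapping.lookup f x))"

lemma lookup_Phi:
  assumes K: "Poly_Mapping.keys f \<subseteq> SMh M" and x: "x \<in> SMh M"
  shows "Poly_Mapping.lookup (Phi f) (std x) = Poly_Mapping.lookup f x"
proof -
  have "Poly_Mapping.lookup (Phi f) (std x) = (\<Sum>y\<in>Poly_Mapping.keys f. if std y = std x then Poly_Mapping.lookup f y else 0)"
    unfolding Phi_def by (simp add: lookup_sum lookup_single when_def)
  also have "\<dots> = (\<Sum>y\<in>Poly_Mapping.keys f. if y = x then Poly_Mapping.lookup f y else 0)"
  proof (rule sum.cong)
    fix y assume "y \<in> Poly_Mapping.keys f"
    then have "y \<in> SMh M" using K by blast
    then have "std y = std x \<longleftrightarrow> y = x" using std_inj[OF _ x] by blast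
    then show "(if std y = std x then Poly_Mapping.lookup f y else 0) = (if y = x then Poly_Mapping.lookup f y else 0)"
      by simp
  qed simp
  also have "\<dots> = Poly_Mapping.lookup f x"
    by (simp add: sum.delta' in_keys_iff)
  finally show ?thesis .
qed

lemma keys_Phi:
  assumes K: "Poly_Mapping.keys f \<subseteq> SMh M"
  shows "Poly_Mapping.keys (Phi f) = std ` Poly_Mapping.keys f"
proof
  show "Poly_Mapping.keys (Phi f) \<subseteq> std ` Poly_Mapping.keys f"
    unfolding Phi_def using keys_sum[of "\<lambda>x. Poly_Mapping.single (std x) (Poly_Mapping.lookup f x)" "Poly_Mapping.keys f"]
    by auto
  show "std ` Poly_Mapping.keys f \<subseteq> Poly_Mapping.keys (Phi f)"
  proof
    fix a assume "a \<in> std ` Poly_Mapping.keys f"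
    then obtain x where x: "x \<in> Poly_Mapping.keys f" "a = std x" by blast
    then have "Poly_Mapping.lookup (Phi f) a = Poly_Mapping.lookup f x" using lookup_Phi[OF K] K by blast
    then show "a \<in> Poly_Mapping.keys (Phi f)" using x(1) by (simp add: in_keys_iff)
  qed
qed

lemma Phi_Ky:
  assumes K: "Poly_Mapping.keys f \<subseteq> SMh M"
  shows "Phi f \<in> Ky M"
proof -
  have "Poly_Mapping.keys (Phi f) \<subseteq> Ey M"
  proof
    fix a assume "a \<in> Poly_Mapping.keys (Phi f)"
    then obtain x where x: "x \<in> Poly_Mapping.keys f" "a = std x" using keys_Phi[OF K] by blast
    have "x \<in> SMh M" using x(1) K by blast
    then show "a \<in> Ey M" using std(1) x(2) by simp
  qed
  then show ?thesis by (simp add: Ky_def)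
qed

lemma psi_Phi:
  assumes K: "Poly_Mapping.keys f \<subseteq> SMh M"
  shows "psi (Phi f) = f"
proof -
  have "psi (Phi f) = (\<Sum>x\<in>Poly_Mapping.keys f. Poly_Mapping.single (psiexp (std x)) (Poly_Mapping.lookup f x))"
    unfolding Phi_def by (simp add: psi_sum psi_single)
  also have "\<dots> = (\<Sum>x\<in>Poly_Mapping.keys f. Poly_Mapping.single x (Poly_Mapping.lookup f x))"
    by (rule sum.cong) (use K std(2) in auto)
  also have "\<dots> = f" by (rule sum_monomials)
  finally show ?thesis .
qed

lemma Phi_nz:
  assumes K: "Poly_Mapping.keys f \<subseteq> SMh M" and "f \<noteq> 0"
  shows "Phi f \<noteq> 0"
proof -
  have "Poly_Mapping.keys (Phi f) \<noteq> {}" using keys_Phi[OF K] assms(2) by simp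
  then show ?thesis by auto
qed

lemma std_NS:
  fixes q :: "(int^'n \<Rightarrow>\<^sub>0 nat) \<Rightarrow>\<^sub>0 'k::ab_group_add"
  assumes x: "x \<in> SMh M" and q: "q \<in> Tideal M" "q \<noteq> 0"
  shows "lm lt q \<noteq> std x"
proof
  assume eq: "lm lt q = std x"
  have qK: "q \<in> Ky M" and p0: "psi q = 0" using q by (auto simp: Tideal_def)
  have KE: "Poly_Mapping.keys q \<subseteq> Ey M" using qK by (simp add: Ky_def)
  have lp: "std x \<in> Poly_Mapping.keys q" "\<forall>b\<in>Poly_Mapping.keys q. b \<noteq> std x \<longrightarrow> lt b (std x)"
    using lm_props[OF qK q(2)] eq by auto
  have "Poly_Mapping.lookup (psi q) x = (\<Sum>a\<in>Poly_Mapping.keys q. if psiexp a = x then Poly_Mapping.lookup q a else 0)"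
    by (rule lookup_psi)
  also have "\<dots> = (\<Sum>a\<in>Poly_Mapping.keys q. if a = std x then Poly_Mapping.lookup q a else 0)"
  proof (rule sum.cong)
    fix a assume a: "a \<in> Poly_Mapping.keys q"
    have "psiexp a = x \<longleftrightarrow> a = std x"
    proof
      assume pa: "psiexp a = x"
      show "a = std x"
      proof (rule ccontr)
        assume ne: "a \<noteq> std x"
        have aE: "a \<in> Ey M" using a KE by blast
        have "lt a (std x)" using lp(2) a ne by blast
        moreover have "lt (std x) a" using std(3)[OF x aE pa] ne by simp
        ultimately show False using lt_asym[OF aE std(1)[OF x]] by blast
      qed
    next
      assume "a = std x" then show "psiexp a = x" using std(2)[OF x] by simp
    qed
    then show "(if psiexp a = x then Poly_Mapping.lookup q a else 0) = (if a = std x then Poly_Mapping.lookup q a else 0)"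
      by simp
  qed simp
  also have "\<dots> = Poly_Mapping.lookup q (std x)" using lp(1) by (simp add: sum.delta')
  finally have "Poly_Mapping.lookup (psi q) x = Poly_Mapping.lookup q (std x)" .
  then have "Poly_Mapping.lookup q (std x) = 0" using p0 by simp
  then show False using lp(1) by (simp add: in_keys_iff)
qed

lemma eta_eq:
  fixes g :: "(int^'n \<Rightarrow>\<^sub>0 nat) \<Rightarrow>\<^sub>0 'k::field"
  assumes g: "g \<in> Ky M"
  shows "eta M lt g = Phi (psi g)"
proof -
  have Kg: "Poly_Mapping.keys (psi g) \<subseteq> SMh M" using psi_KS[OF g] by (simp add: KS_def)
  have PK: "Phi (psi g) \<in> Ky M" using Phi_Ky[OF Kg] .
  have pP: "psi (Phi (psi g)) = psi g" using psi_Phi[OF Kg] .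
  show ?thesis
    unfolding eta_def
  proof (rule the_equality)
    show "Phi (psi g) \<in> Ky M \<and> g - Phi (psi g) \<in> Tideal M \<and>
      (\<forall>\<alpha>\<in>Poly_Mapping.keys (Phi (psi g)). \<not> (\<exists>q\<in>Tideal M. q \<noteq> (0 :: (int^'n \<Rightarrow>\<^sub>0 nat) \<Rightarrow>\<^sub>0 'k) \<and> lm lt q = \<alpha>))"
    proof (intro conjI ballI)
      show "Phi (psi g) \<in> Ky M" using PK .
      show "g - Phi (psi g) \<in> Tideal M" using Ky_diff[OF g PK] pP by (simp add: Tideal_def psi_diff)
      fix \<alpha> assume "\<alpha> \<in> Poly_Mapping.keys (Phi (psi g))"
      then obtain x where x: "x \<in> Poly_Mapping.keys (psi g)" "\<alpha> = std x" using keys_Phi[OF Kg] by blast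
      have xS: "x \<in> SMh M" using x(1) Kg by blast
      show "\<not> (\<exists>q\<in>Tideal M. q \<noteq> (0 :: (int^'n \<Rightarrow>\<^sub>0 nat) \<Rightarrow>\<^sub>0 'k) \<and> lm lt q = \<alpha>)"
        using std_NS[OF xS] x(2) by blast
    qed
  next
    fix r :: "(int^'n \<Rightarrow>\<^sub>0 nat) \<Rightarrow>\<^sub>0 'k"
    assume r: "r \<in> Ky M \<and> g - r \<in> Tideal M \<and>
      (\<forall>\<alpha>\<in>Poly_Mapping.keys r. \<not> (\<exists>q\<in>Tideal M. q \<noteq> (0 :: (int^'n \<Rightarrow>\<^sub>0 nat) \<Rightarrow>\<^sub>0 'k) \<and> lm lt q = \<alpha>))"
    define q where "q = r - Phi (psi g)"
    have rK: "r \<in> Ky M" using r by blast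
    have "psi (g - r) = 0" using r by (simp add: Tideal_def)
    then have pr: "psi r = psi g" by (simp add: psi_diff)
    have qK: "q \<in> Ky M" unfolding q_def using Ky_diff[OF rK PK] .
    have qT: "q \<in> Tideal M" using qK pr pP by (simp add: Tideal_def q_def psi_diff)
    show "r = Phi (psi g)"
    proof (rule ccontr)
      assume "r \<noteq> Phi (psi g)"
      then have qn: "q \<noteq> 0" by (simp add: q_def)
      have lmk: "lm lt q \<in> Poly_Mapping.keys q" using lm_props[OF qK qn] by blast
      then have "lm lt q \<in> Poly_Mapping.keys r \<or> lm lt q \<in> Poly_Mapping.keys (Phi (psi g))"
        using keys_diff[of r "Phi (psi g)"] unfolding q_def by blast
      then show False
      proof
        assume "lm lt q \<in> Poly_Mapping.keys r"
        then show False using r qT qn by blast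
      next
        assume "lm lt q \<in> Poly_Mapping.keys (Phi (psi g))"
        then obtain x where x: "x \<in> Poly_Mapping.keys (psi g)" "lm lt q = std x" using keys_Phi[OF Kg] by blast
        have xS: "x \<in> SMh M" using x(1) Kg by blast
        show False using std_NS[OF xS qT qn] x(2) by blast
      qed
    qed
  qed
qed

lemma phi_eq:
  fixes f :: "(int^'n) \<times> int \<Rightarrow>\<^sub>0 'k::field"
  assumes f: "f \<in> KS (SMh M)"
  shows "phi M lt f = Phi f"
proof -
  have K: "Poly_Mapping.keys f \<subseteq> SMh M" using f by (simp add: KS_def)
  have ex: "\<exists>g. g \<in> Ky M \<and> psi g = f" using Phi_Ky[OF K] psi_Phi[OF K] by blast
  define g where "g = (SOME g. g \<in> Ky M \<and> psi g = f)"
  have g: "g \<in> Ky M" "psi g = f" using someI_ex[OF ex] unfolding g_def by auto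
  show ?thesis unfolding phi_def g_def[symmetric] using eta_eq[OF g(1)] g(2) by simp
qed

lemma lm_Phi:
  assumes K: "Poly_Mapping.keys f \<subseteq> SMh M" and nz: "f \<noteq> 0"
  shows "lm lt (Phi f) = std (lm hl f)"
proof -
  define m where "m = lm hl f"
  have m: "m \<in> Poly_Mapping.keys f" "\<forall>b\<in>Poly_Mapping.keys f. b \<noteq> m \<longrightarrow> hl b m"
    using lm_hl_props[OF K nz] unfolding m_def by auto
  have mS: "m \<in> SMh M" using m(1) K by blast
  have KE: "Poly_Mapping.keys (Phi f) \<subseteq> Ey M" using Phi_Ky[OF K] by (simp add: Ky_def)
  show ?thesis unfolding m_def[symmetric]
  proof (rule lm_unique[where r="lt"])
    show "std m \<in> Poly_Mapping.keys (Phi f)" using keys_Phi[OF K] m(1) by blast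
    show "\<forall>b\<in>Poly_Mapping.keys (Phi f). b \<noteq> std m \<longrightarrow> lt b (std m)"
    proof (intro ballI impI)
      fix b assume b: "b \<in> Poly_Mapping.keys (Phi f)" "b \<noteq> std m"
      then obtain y where y: "y \<in> Poly_Mapping.keys f" "b = std y" using keys_Phi[OF K] by blast
      then have "y \<noteq> m" using b(2) by blast
      then have "hl y m" using m(2) y(1) by blast
      moreover have "y \<in> SMh M" using y(1) K by blast
      ultimately show "lt b (std m)" using std_mono[OF _ mS] y(2) by blast
    qed
    fix x y assume "x \<in> Poly_Mapping.keys (Phi f)" "y \<in> Poly_Mapping.keys (Phi f)" "lt x y"
    then show "\<not> lt y x" using lt_asym[of x y] KE by blast
  qed
qed

end

lemma single_mult_expand:
  "Poly_Mapping.single d c * g = (\<Sum>b\<in>Poly_Mapping.keys g. Poly_Mapping.single (d + b) (c * Poly_Mapping.lookup g b))"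
proof -
  have "Poly_Mapping.single d c * g = Poly_Mapping.single d c * (\<Sum>b\<in>Poly_Mapping.keys g. Poly_Mapping.single b (Poly_Mapping.lookup g b))"
    by (simp only: sum_monomials)
  also have "\<dots> = (\<Sum>b\<in>Poly_Mapping.keys g. Poly_Mapping.single d c * Poly_Mapping.single b (Poly_Mapping.lookup g b))"
    by (rule sum_distrib_left)
  finally show ?thesis by (simp add: mult_single)
qed

lemma lookup_single_mult:
  fixes g :: "('a::cancel_comm_monoid_add) \<Rightarrow>\<^sub>0 'k::semiring_0"
  shows "Poly_Mapping.lookup (Poly_Mapping.single d c * g) (d + b) = c * Poly_Mapping.lookup g b"
proof -
  have "Poly_Mapping.lookup (Poly_Mapping.single d c * g) (d + b) = (\<Sum>b'\<in>Poly_Mapping.keys g. if b' = b then c * Poly_Mapping.lookup g b' else 0)"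
    unfolding single_mult_expand by (simp add: lookup_sum lookup_single when_def)
  also have "\<dots> = c * Poly_Mapping.lookup g b" by (simp add: sum.delta' in_keys_iff)
  finally show ?thesis .
qed

lemma keys_single_mult:
  "Poly_Mapping.keys (Poly_Mapping.single d c * g) \<subseteq> (\<lambda>b. d + b) ` Poly_Mapping.keys g"
  using keys_mult[of "Poly_Mapping.single d c" g] by (auto split: if_splits)

context sset begin

lemma reduce_step:
  fixes f g :: "(int^'n \<Rightarrow>\<^sub>0 nat) \<Rightarrow>\<^sub>0 'k::field"
  assumes f: "f \<in> Ky M" "f \<noteq> 0" and g: "g \<in> Ky M" "g \<noteq> 0"
    and dv: "lm lt f = lm lt g + \<delta>"
  defines "h \<equiv> Poly_Mapping.single \<delta> (Poly_Mapping.lookup f (lm lt f) / Poly_Mapping.lookup g (lm lt g)) * g"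
  shows "\<forall>k\<in>Poly_Mapping.keys (f - h). lt k (lm lt f)"
proof
  fix k assume k: "k \<in> Poly_Mapping.keys (f - h)"
  have lf: "lm lt f \<in> Poly_Mapping.keys f" "\<forall>b\<in>Poly_Mapping.keys f. b \<noteq> lm lt f \<longrightarrow> lt b (lm lt f)"
    using lm_props[OF f] by auto
  have lg: "lm lt g \<in> Poly_Mapping.keys g" "\<forall>b\<in>Poly_Mapping.keys g. b \<noteq> lm lt g \<longrightarrow> lt b (lm lt g)"
    using lm_props[OF g] by auto
  have KEf: "Poly_Mapping.keys f \<subseteq> Ey M" using f(1) by (simp add: Ky_def)
  have KEg: "Poly_Mapping.keys g \<subseteq> Ey M" using g(1) by (simp add: Ky_def)
  have lfE: "lm lt f \<in> Ey M" using lf(1) KEf by blast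
  have lgE: "lm lt g \<in> Ey M" using lg(1) KEg by blast
  have dE: "\<delta> \<in> Ey M" using Ey_summand[of "lm lt g" \<delta> M] lfE dv by simp
  have lg0: "Poly_Mapping.lookup g (lm lt g) \<noteq> 0" using lg(1) by (simp add: in_keys_iff)
  have "Poly_Mapping.lookup h (lm lt f) = Poly_Mapping.lookup f (lm lt f)"
    unfolding h_def dv by (subst add.commute) (simp add: lookup_single_mult lg0)
  then have "Poly_Mapping.lookup (f - h) (lm lt f) = 0" by (simp add: lookup_minus)
  then have kne: "k \<noteq> lm lt f" using k by (auto simp: in_keys_iff)
  have "k \<in> Poly_Mapping.keys f \<or> k \<in> Poly_Mapping.keys h" using keys_diff[of f h] k by blast
  then show "lt k (lm lt f)"
  proof
    assume "k \<in> Poly_Mapping.keys f" then show ?thesis using lf(2) kne by blast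
  next
    assume "k \<in> Poly_Mapping.keys h"
    then obtain b where b: "b \<in> Poly_Mapping.keys g" "k = \<delta> + b"
      using keys_single_mult unfolding h_def by blast
    have bE: "b \<in> Ey M" using b(1) KEg by blast
    have "b \<noteq> lm lt g" using kne b(2) dv by (auto simp: add.commute)
    then have "lt b (lm lt g)" using lg(2) b(1) by blast
    then have "lt (b + \<delta>) (lm lt g + \<delta>)" using lt_mono[OF bE lgE dE] by blast
    then show ?thesis using b(2) dv by (simp add: add.commute)
  qed
qed

lemma gen_by_G:
  fixes J G :: "((int^'n \<Rightarrow>\<^sub>0 nat) \<Rightarrow>\<^sub>0 'k::field) set"
  assumes JK: "J \<subseteq> Ky M"
    and Jdiff: "\<And>a b. a \<in> J \<Longrightarrow> b \<in> J \<Longrightarrow> a - b \<in> J"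
    and Jmult: "\<And>r a. r \<in> Ky M \<Longrightarrow> a \<in> J \<Longrightarrow> r * a \<in> J"
    and GJ: "G \<subseteq> J"
    and dvd: "\<forall>f\<in>J. f \<noteq> 0 \<longrightarrow> (\<exists>g\<in>G. g \<noteq> 0 \<and> ydvd (lm lt g) (lm lt f))"
    and fJ: "f \<in> J"
  shows "f \<in> ideal_gen (Ky M) G"
proof -
  have main: "\<forall>f\<in>J. f \<noteq> 0 \<longrightarrow> lm lt f = a \<longrightarrow> f \<in> ideal_gen (Ky M) G" if aE: "a \<in> Ey M" for a
    using aE
  proof (induction a rule: lt_induct)
    case (1 a)
    show ?case
    proof (intro ballI impI)
      fix f assume fJ: "f \<in> J" and fn: "f \<noteq> 0" and la: "lm lt f = a"
      have fK: "f \<in> Ky M" using fJ JK by blast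
      obtain g where g: "g \<in> G" "g \<noteq> 0" "ydvd (lm lt g) (lm lt f)" using dvd fJ fn by blast
      obtain \<delta> where dv: "lm lt f = lm lt g + \<delta>" using g(3) by (auto simp: ydvd_def)
      have gJ: "g \<in> J" using g(1) GJ by blast
      have gK: "g \<in> Ky M" using gJ JK by blast
      have KEf: "Poly_Mapping.keys f \<subseteq> Ey M" using fK by (simp add: Ky_def)
      have lfE: "lm lt f \<in> Ey M" using lm_props[OF fK fn] KEf by blast
      have dE: "\<delta> \<in> Ey M" using Ey_summand[of "lm lt g" \<delta> M] lfE dv by simp
      define c where "c = Poly_Mapping.lookup f (lm lt f) / Poly_Mapping.lookup g (lm lt g)"
      define h where "h = Poly_Mapping.single \<delta> c * g"
      have sK: "Poly_Mapping.single \<delta> c \<in> Ky M" using Ky_single[OF dE] .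
      have hJ: "h \<in> J" unfolding h_def using Jmult[OF sK gJ] .
      have f'J: "f - h \<in> J" using Jdiff[OF fJ hJ] .
      have keys': "\<forall>k\<in>Poly_Mapping.keys (f - h). lt k (lm lt f)"
        using reduce_step[OF fK fn gK g(2) dv] unfolding h_def c_def .
      have f'IG: "f - h \<in> ideal_gen (Ky M) G"
      proof (cases "f - h = 0")
        case True then show ?thesis by (simp add: ideal_gen.intros)
      next
        case False
        have f'K: "f - h \<in> Ky M" using f'J JK by blast
        have lk: "lm lt (f - h) \<in> Poly_Mapping.keys (f - h)" using lm_props[OF f'K False] by blast
        have lE: "lm lt (f - h) \<in> Ey M" using lk f'K by (auto simp: Ky_def)
        have ltf: "lt (lm lt (f - h)) a" using keys' lk la by blast
        have "\<forall>p\<in>J. p \<noteq> 0 \<longrightarrow> lm lt p = lm lt (f - h) \<longrightarrow> p \<in> ideal_gen (Ky M) G"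
          by (rule 1(2)[OF lE ltf lE])
        then show ?thesis using f'J False by blast
      qed
      have "Poly_Mapping.single \<delta> c * g + (f - h) \<in> ideal_gen (Ky M) G"
        by (rule ideal_gen_step[OF sK g(1) f'IG])
      then show "f \<in> ideal_gen (Ky M) G" by (simp add: h_def)
    qed
  qed (rule aE)
  show ?thesis
  proof (cases "f = 0")
    case True then show ?thesis by (simp add: ideal_gen.intros)
  next
    case False
    have fK: "f \<in> Ky M" using fJ JK by blast
    have "lm lt f \<in> Ey M" using lm_props[OF fK False] fK by (auto simp: Ky_def)
    then have "\<forall>p\<in>J. p \<noteq> 0 \<longrightarrow> lm lt p = lm lt f \<longrightarrow> p \<in> ideal_gen (Ky M) G" by (rule main)
    then show ?thesis using fJ False by blast
  qed
qed

lemma psi_IG: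
  fixes G :: "((int^'n \<Rightarrow>\<^sub>0 nat) \<Rightarrow>\<^sub>0 'k::field) set"
  assumes "p \<in> ideal_gen (Ky M) G"
  shows "psi p \<in> ideal_gen (KS (SMh M)) (psi ` G)"
  using assms
proof induction
  case ideal_gen_zero then show ?case by (simp add: ideal_gen.intros)
next
  case (ideal_gen_step r b x)
  have "psi r * psi b + psi x \<in> ideal_gen (KS (SMh M)) (psi ` G)"
    by (rule ideal_gen.ideal_gen_step) (use ideal_gen_step psi_KS in auto)
  then show ?case by (simp add: psi_add psi_mult)
qed

end

context sset begin

lemma std_factor:
  assumes m: "m \<in> SMh M" and gE: "\<gamma> \<in> Ey M" and eE: "\<epsilon> \<in> Ey M" and eq: "std m = \<gamma> + \<epsilon>"
  shows "std (psiexp \<gamma>) = \<gamma>"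
proof (rule std_unique[OF gE])
  fix b assume b: "b \<in> Ey M" "psiexp b = psiexp \<gamma>" "b \<noteq> \<gamma>"
  show "lt \<gamma> b"
  proof (rule ccontr)
    assume "\<not> lt \<gamma> b"
    then have "lt b \<gamma>" using lt_total[OF b(1) gE] b(3) by blast
    then have l1: "lt (b + \<epsilon>) (std m)" using lt_mono[OF b(1) gE eE] eq by simp
    have bE: "b + \<epsilon> \<in> Ey M" using Ey_add[OF b(1) eE] .
    have pb: "psiexp (b + \<epsilon>) = m" using b(2) std(2)[OF m] eq by (simp add: psiexp_add)
    have "b + \<epsilon> \<noteq> std m" using l1 lt_irrefl[OF bE] by auto
    then have "lt (std m) (b + \<epsilon>)" using std(3)[OF m bE pb] by simp
    then show False using lt_asym[OF bE std(1)[OF m]] l1 by blast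
  qed
qed

lemma main_locale:
  fixes I :: "((int^'n) \<times> int \<Rightarrow>\<^sub>0 'k::field_char_0) set"
    and J G :: "((int^'n \<Rightarrow>\<^sub>0 nat) \<Rightarrow>\<^sub>0 'k) set"
  assumes hI: "homogeneous_ideal M I"
    and Jdef: "J = ideal_gen (Ky M) (phi M lt ` I \<union> Tideal M)"
    and gb: "groebner_basis lt J G"
  shows "sparse_groebner_basis M lessM I (psi ` G)"
proof -
  obtain B where BK: "B \<subseteq> KS (SMh M)" and Idef: "I = ideal_gen (KS (SMh M)) B"
    using hI unfolding homogeneous_ideal_def by blast
  have KS0: "0 \<in> KS (SMh M)" by (simp add: KS_def)
  have IK: "I \<subseteq> KS (SMh M)" unfolding Idef
    by (rule ideal_gen_least[OF KS0]) (use BK KS_add KS_SMh_mult in blast)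
  have I0: "0 \<in> I" unfolding Idef by (rule ideal_gen_zero)
  have Iadd: "\<And>x y. x \<in> I \<Longrightarrow> y \<in> I \<Longrightarrow> x + y \<in> I" unfolding Idef by (rule ideal_gen_add)
  have Imult: "\<And>r x. r \<in> KS (SMh M) \<Longrightarrow> x \<in> I \<Longrightarrow> r * x \<in> I" unfolding Idef
    by (rule ideal_gen_mult[OF KS_SMh_mult])
  have phiI: "\<And>f. f \<in> I \<Longrightarrow> phi M lt f = Phi f" using phi_eq IK by blast
  have KI: "\<And>f. f \<in> I \<Longrightarrow> Poly_Mapping.keys f \<subseteq> SMh M" using IK by (auto simp: KS_def)
  have JK: "J \<subseteq> Ky M" unfolding Jdef
  proof (rule ideal_gen_least[OF Ky_zero])
    fix r b x :: "(int^'n \<Rightarrow>\<^sub>0 nat) \<Rightarrow>\<^sub>0 'k"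
    assume r: "r \<in> Ky M" and b: "b \<in> phi M lt ` I \<union> Tideal M" and x: "x \<in> Ky M"
    have "b \<in> Ky M"
    proof (cases "b \<in> Tideal M")
      case True then show ?thesis by (simp add: Tideal_def)
    next
      case False
      then obtain f where f: "f \<in> I" "b = phi M lt f" using b by blast
      then show ?thesis using phiI[OF f(1)] Phi_Ky[OF KI[OF f(1)]] by simp
    qed
    then show "r * b + x \<in> Ky M" using Ky_add[OF Ky_mult[OF r] x] by blast
  qed
  have Jdiff: "\<And>a b. a \<in> J \<Longrightarrow> b \<in> J \<Longrightarrow> a - b \<in> J" unfolding Jdef
    by (rule ideal_gen_diff[OF Ky_uminus])
  have Jmult: "\<And>r a. r \<in> Ky M \<Longrightarrow> a \<in> J \<Longrightarrow> r * a \<in> J" unfolding Jdef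
    by (rule ideal_gen_mult[OF Ky_mult])
  have PhiJ: "\<And>f. f \<in> I \<Longrightarrow> Phi f \<in> J"
  proof -
    fix f assume f: "f \<in> I"
    have "phi M lt f \<in> J" unfolding Jdef using f by (intro ideal_gen_base[OF Ky_one]) blast
    then show "Phi f \<in> J" using phiI[OF f] by simp
  qed
  have psiJ: "\<And>p. p \<in> J \<Longrightarrow> psi p \<in> I"
  proof -
    have "J \<subseteq> {p. psi p \<in> I}" unfolding Jdef
    proof (rule ideal_gen_least)
      show "0 \<in> {p. psi p \<in> I}" using I0 by simp
      fix r b x :: "(int^'n \<Rightarrow>\<^sub>0 nat) \<Rightarrow>\<^sub>0 'k"
      assume r: "r \<in> Ky M" and b: "b \<in> phi M lt ` I \<union> Tideal M" and x: "x \<in> {p. psi p \<in> I}"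
      have "psi b \<in> I"
      proof (cases "b \<in> Tideal M")
        case True then show ?thesis using I0 by (simp add: Tideal_def)
      next
        case False
        then obtain f where f: "f \<in> I" "b = phi M lt f" using b by blast
        then show ?thesis using phiI[OF f(1)] psi_Phi[OF KI[OF f(1)]] by simp
      qed
      then have "psi r * psi b + psi x \<in> I" using Iadd Imult psi_KS[OF r] x by blast
      then show "r * b + x \<in> {p. psi p \<in> I}" by (simp add: psi_add psi_mult)
    qed
    then show "\<And>p. p \<in> J \<Longrightarrow> psi p \<in> I" by blast
  qed
  have Gfin: "finite G" and GJ: "G \<subseteq> J"
    and dvd: "\<forall>f\<in>J. f \<noteq> 0 \<longrightarrow> (\<exists>g\<in>G. g \<noteq> 0 \<and> ydvd (lm lt g) (lm lt f))"
    using gb unfolding groebner_basis_def by blast+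
  have part1: "psi ` G \<subseteq> I" using GJ psiJ by blast
  have part2: "ideal_gen (KS (SMh M)) (psi ` G) = I"
  proof
    show "ideal_gen (KS (SMh M)) (psi ` G) \<subseteq> I"
      by (rule ideal_gen_least[OF I0]) (use Iadd Imult part1 in blast)
    show "I \<subseteq> ideal_gen (KS (SMh M)) (psi ` G)"
    proof
      fix f assume f: "f \<in> I"
      have "Phi f \<in> ideal_gen (Ky M) G"
        by (rule gen_by_G[OF JK Jdiff Jmult GJ dvd PhiJ[OF f]])
      then have "psi (Phi f) \<in> ideal_gen (KS (SMh M)) (psi ` G)" by (rule psi_IG)
      then show "f \<in> ideal_gen (KS (SMh M)) (psi ` G)" using psi_Phi[OF KI[OF f]] by simp
    qed
  qed
  have part3: "\<forall>f\<in>I. f \<noteq> 0 \<longrightarrow> (\<exists>g\<in>psi ` G. g \<noteq> 0 \<and> delta_dvd M (lm hl g) (lm hl f))"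
  proof (intro ballI impI)
    fix f assume f: "f \<in> I" and fn: "f \<noteq> 0"
    have K: "Poly_Mapping.keys f \<subseteq> SMh M" using KI[OF f] .
    define m where "m = lm hl f"
    have mS: "m \<in> SMh M" using lm_hl_props[OF K fn] K unfolding m_def by blast
    have PJ: "Phi f \<in> J" using PhiJ[OF f] .
    have Pn: "Phi f \<noteq> 0" using Phi_nz[OF K fn] .
    have lP: "lm lt (Phi f) = std m" using lm_Phi[OF K fn] unfolding m_def .
    obtain g where g: "g \<in> G" "g \<noteq> 0" "ydvd (lm lt g) (std m)" using dvd PJ Pn lP by metis
    define \<gamma> where "\<gamma> = lm lt g"
    obtain \<epsilon> where eq: "std m = \<gamma> + \<epsilon>" using g(3) unfolding ydvd_def \<gamma>_def by blast
    have gK: "g \<in> Ky M" using g(1) GJ JK by blast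
    have lg: "\<gamma> \<in> Poly_Mapping.keys g" "\<forall>b\<in>Poly_Mapping.keys g. b \<noteq> \<gamma> \<longrightarrow> lt b \<gamma>"
      using lm_props[OF gK g(2)] unfolding \<gamma>_def by auto
    have KEg: "Poly_Mapping.keys g \<subseteq> Ey M" using gK by (simp add: Ky_def)
    have gE: "\<gamma> \<in> Ey M" using lg(1) KEg by blast
    have smE: "std m \<in> Ey M" using std(1)[OF mS] .
    have eE: "\<epsilon> \<in> Ey M" using Ey_summand[of \<gamma> \<epsilon> M] smE eq by simp
    have sg: "std (psiexp \<gamma>) = \<gamma>" by (rule std_factor[OF mS gE eE eq])
    have se: "std (psiexp \<epsilon>) = \<epsilon>" by (rule std_factor[OF mS eE gE]) (simp add: eq add.commute)
    have ss: "std (psiexp (std m)) = std m" using std_std[OF mS] .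
    have pgS: "psiexp \<gamma> \<in> SMh M" using psiexp_SMh[OF gE] .
    have lk: "Poly_Mapping.lookup (psi g) (psiexp \<gamma>) = Poly_Mapping.lookup g \<gamma>"
    proof -
      have "Poly_Mapping.lookup (psi g) (psiexp \<gamma>) = (\<Sum>a\<in>Poly_Mapping.keys g. if psiexp a = psiexp \<gamma> then Poly_Mapping.lookup g a else 0)"
        by (rule lookup_psi)
      also have "\<dots> = (\<Sum>a\<in>Poly_Mapping.keys g. if a = \<gamma> then Poly_Mapping.lookup g a else 0)"
      proof (rule sum.cong)
        fix a assume a: "a \<in> Poly_Mapping.keys g"
        have "psiexp a = psiexp \<gamma> \<longleftrightarrow> a = \<gamma>"
        proof
          assume pa: "psiexp a = psiexp \<gamma>"
          show "a = \<gamma>"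
          proof (rule ccontr)
            assume ne: "a \<noteq> \<gamma>"
            have aE: "a \<in> Ey M" using a KEg by blast
            have "lt a \<gamma>" using lg(2) a ne by blast
            moreover have "lt \<gamma> a" using std(3)[OF pgS aE pa] ne sg by simp
            ultimately show False using lt_asym[OF aE gE] by blast
          qed
        qed simp
        then show "(if psiexp a = psiexp \<gamma> then Poly_Mapping.lookup g a else 0) = (if a = \<gamma> then Poly_Mapping.lookup g a else 0)"
          by simp
      qed simp
      also have "\<dots> = Poly_Mapping.lookup g \<gamma>" using lg(1) by (simp add: sum.delta')
      finally show ?thesis .
    qed
    have pgk: "psiexp \<gamma> \<in> Poly_Mapping.keys (psi g)" using lk lg(1) by (simp add: in_keys_iff)
    then have pgn: "psi g \<noteq> 0" by auto
    have KpS: "Poly_Mapping.keys (psi g) \<subseteq> SMh M" using psi_KS[OF gK] by (simp add: KS_def)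
    have lpg: "lm hl (psi g) = psiexp \<gamma>"
    proof (rule lm_unique[where r="hl", OF pgk])
      show "\<forall>y\<in>Poly_Mapping.keys (psi g). y \<noteq> psiexp \<gamma> \<longrightarrow> hl y (psiexp \<gamma>)"
      proof (intro ballI impI)
        fix y assume y: "y \<in> Poly_Mapping.keys (psi g)" "y \<noteq> psiexp \<gamma>"
        then obtain a where a: "a \<in> Poly_Mapping.keys g" "y = psiexp a" using keys_psi by blast
        have aE: "a \<in> Ey M" using a(1) KEg by blast
        have "a \<noteq> \<gamma>" using a(2) y(2) by blast
        then have "lt a \<gamma>" using lg(2) a(1) by blast
        then show "hl y (psiexp \<gamma>)" using lt_to_hl[OF aE gE sg] a(2) y(2) by blast
      qed
      fix x y assume "x \<in> Poly_Mapping.keys (psi g)" "y \<in> Poly_Mapping.keys (psi g)" "hl x y"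
      then show "\<not> hl y x" using hl_asym[of x y] KpS by blast
    qed
    have dd: "delta_dvd M (psiexp \<gamma>) m"
      unfolding delta_dvd_def
    proof (rule bexI[of _ "psiexp \<epsilon>"])
      show "psiexp \<epsilon> \<in> SMh M" using psiexp_SMh[OF eE] .
      have pm: "psiexp \<gamma> + psiexp \<epsilon> = m" using std(2)[OF mS] eq by (simp add: psiexp_add)
      have d1: "Poly_Mapping.lookup \<gamma> 0 + deltaA M (fst (psiexp \<gamma>)) = ydeg \<gamma>" using std_delta[OF gE sg] .
      have d2: "Poly_Mapping.lookup \<epsilon> 0 + deltaA M (fst (psiexp \<epsilon>)) = ydeg \<epsilon>" using std_delta[OF eE se] .
      have d3: "Poly_Mapping.lookup (std m) 0 + deltaA M (fst (psiexp (std m))) = ydeg (std m)" using std_delta[OF smE ss] .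
      have fm: "fst (psiexp (std m)) = fst m" using std(2)[OF mS] by simp
      have y3: "ydeg (std m) = ydeg \<gamma> + ydeg \<epsilon>" using eq by (simp add: ydeg_add)
      have l3: "Poly_Mapping.lookup (std m) 0 = Poly_Mapping.lookup \<gamma> 0 + Poly_Mapping.lookup \<epsilon> 0" using eq by (simp add: lookup_add)
      have "deltaA M (fst (psiexp \<gamma>)) + deltaA M (fst (psiexp \<epsilon>)) = deltaA M (fst m)"
      proof -
        have d3': "Poly_Mapping.lookup (std m) 0 + deltaA M (fst m) = ydeg (std m)" using d3 fm by simp
        show ?thesis using d1 d2 d3' y3 l3 by linarith
      qed
      then show "psiexp \<gamma> + psiexp \<epsilon> = m \<and> deltaA M (fst (psiexp \<gamma>)) + deltaA M (fst (psiexp \<epsilon>)) = deltaA M (fst m)"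
        using pm by simp
    qed
    show "\<exists>g'\<in>psi ` G. g' \<noteq> 0 \<and> delta_dvd M (lm hl g') (lm hl f)"
    proof (rule bexI[of _ "psi g"])
      show "psi g \<noteq> 0 \<and> delta_dvd M (lm hl (psi g)) (lm hl f)" using pgn lpg dd by (simp add: m_def)
      show "psi g \<in> psi ` G" using g(1) by simp
    qed
  qed
  show ?thesis unfolding sparse_groebner_basis_def using part1 part2 part3 by blast
qed

end

theorem mainTheorem2:
  fixes M :: "(real^'n) set"
    and lessM :: "int^'n \<Rightarrow> int^'n \<Rightarrow> bool"
    and tilde :: "(int^'n \<Rightarrow>\<^sub>0 nat) \<Rightarrow> (int^'n \<Rightarrow>\<^sub>0 nat) \<Rightarrow> bool"
    and I :: "(((int^'n) \<times> int) \<Rightarrow>\<^sub>0 'k::field_char_0) set"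
    and J G :: "((int^'n \<Rightarrow>\<^sub>0 nat) \<Rightarrow>\<^sub>0 'k) set"
  assumes "polytope M" and "0 \<in> M"
    and "pointed (SM M)" and "pointed (SMh M)"
    and "monomial_order (SM M) lessM"
    and "monomial_order (Ey M) tilde"
    and "homogeneous_ideal M I"
    and "J = ideal_gen (Ky M) (phi M (less_y lessM tilde) ` I \<union> Tideal M)"
    and "groebner_basis (less_y lessM tilde) J G"
  shows "sparse_groebner_basis M lessM I (psi ` G)"
proof -
  have finL: "finite (lattice_pts M)" using lattice_pts_finite[OF assms(1)] .
  have "(\<chi> i. real_of_int ((0::int^'n) $ i)) = (0::real^'n)" by (simp add: vec_eq_iff)
  then have zeroL: "0 \<in> lattice_pts M" using assms(2) by (simp add: lattice_pts_def)
  interpret sset M lessM tilde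
    using finL zeroL assms(5,6) by unfold_locales
  show ?thesis using main_locale[OF assms(7,8,9)] .
qed


end
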